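(* Let $\mathbf F$ be a Baire foliage tree on a space $X$ and let $\varphi$ be a consistent family of foliage grafts for $\mathbf F$ such that every $\mathbf G\in\varphi$ is $\aleph_0$-branching, locally strict, open in $X$, has bounded chains, and has $\mathrm{height}\,\mathbf G\le\omega$. Then $\mathrm{fhybr}(\mathbf F,\varphi)$ is a Baire foliage tree on the subspace $X\setminus\mathrm{loss}(\mathbf F,\varphi)$ of $X$.
   Context: Trees: a tree is a pair $(Q,<)$ with $<$ irreflexive transitive and predecessor sets well-ordered; $\parallel$ = incomparable; $\mathrm{sons}(x)$ = immediate successors; $\max$ = maximal nodes; $0$ = least node; a branch is a maximal chain; bounded chains: every nonempty chain has an upper-bound node; $\kappa$-branching: every non-maximal node has exactly $\kappa$ sons; height of the tree = least ordinal $\beta$ with no node whose predecessor set has order type $\beta$; $A{\downarrow}=\{v:\exists a\in A\ a\le v\}$; for an antichain $A$ and $x\in A{\downarrow}$, $\mathrm{root}(x,A)$ is the unique $r\in A$, $r\le x$. A graft for a tree $\mathcal T$ is a tree $\mathcal G$ with more than one node, least node $0_{\mathcal G}\in\mathrm{nodes}\,\mathcal T$, $\max\mathcal G\subseteq\{v\in\mathrm{nodes}\,\mathcal T:v>_{\mathcal T}0_{\mathcal G}\}$ an antichain in $\mathcal T$, and $\mathrm{impl}\,\mathcal G:=\mathrm{nodes}\,\mathcal G\setminus(\{0_{\mathcal G}\}\cup\max\mathcal G)$ disjoint from $\mathrm{nodes}\,\mathcal T$; $\mathrm{expl}(\mathcal T,\mathcal G)=\{v:v>_{\mathcal T}0_{\mathcal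 G}\}\setminus(\max\mathcal G){\downarrow}_{\mathcal T}$. A consistent family $\gamma$ of grafts for $\mathcal T$: members are grafts with pairwise disjoint implants and for distinct $\mathcal D,\mathcal E$: $0_{\mathcal D}\parallel_{\mathcal T}0_{\mathcal E}$ or $0_{\mathcal D}\in(\max\mathcal E){\downarrow}_{\mathcal T}$ or $0_{\mathcal E}\in(\max\mathcal D){\downarrow}_{\mathcal T}$. $\mathrm{supp}(\mathcal T,\gamma)=\mathrm{nodes}\,\mathcal T\setminus\bigcup_{\mathcal G\in\gamma}\mathrm{expl}(\mathcal T,\mathcal G)$. $\mathrm{hybr}(\mathcal T,\gamma)$ is the tree on $\mathrm{supp}(\mathcal T,\gamma)\cup\bigcup_{\mathcal G\in\gamma}\mathrm{impl}\,\mathcal G$ with $x<y$ iff: (b1) $x,y\in\mathrm{supp}$, $x<_{\mathcal T}y$; (b2) $x,y\in\mathrm{impl}\,\mathcal G$, $x<_{\mathcal G}y$; (b3) $x\in\mathrm{supp}$, $y\in\mathrm{impl}\,\mathcal G$, $x\le_{\mathcal T}0_{\mathcal G}$; (b4) $x\in\mathrm{impl}\,\mathcal G$, $y\in\mathrm{supp}\cap(\max\mathcal G){\downarrow}_{\mathcal T}$, $x<_{\mathcal G}\mathrm{root}_{\mathcal T}(y,\max\mathcal G)$; or (b5) $x\in\mathrm{impl}\,\mathcal D$, $y\in\mathrm{impl}\,\mathcal E$ ($\mathcal D\ne\mathcal E$), $0_{\mathcal E}\in(\max\mathcal D){\downarrow}_{\mathcal T}$, $x<_{\mathcal D}\mathrm{root}_{\mathcal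 T}(0_{\mathcal E},\max\mathcal D)$. Foliage trees: $\mathbf F=(\mathcal T,l)$, skeleton $\mathrm{skel}\,\mathbf F=\mathcal T$, leaves $\mathbf F_x=l(x)$; tree notions refer to the skeleton; $\mathrm{fruit}_{\mathbf F}(A)=\bigcap_{x\in A}\mathbf F_x$. Nonincreasing: $x\le y\Rightarrow\mathbf F_y\subseteq\mathbf F_x$; locally strict: each non-maximal $\mathbf F_x$ is the union of the pairwise disjoint family $(\mathbf F_s)_{s\in\mathrm{sons}(x)}$; strict branches: has a node and every branch has singleton fruit; open in $X$: all leaves open. A Baire foliage tree on $X$ is a foliage tree with skeleton isomorphic to $(\omega^{<\omega},\subsetneq)$, open in $X$, locally strict, with strict branches, and leaf at the least node equal to $X$. A foliage graft for a nonincreasing $\mathbf F$ is a nonincreasing foliage tree $\mathbf G$ with $\mathrm{skel}\,\mathbf G$ a graft for $\mathrm{skel}\,\mathbf F$, $\mathbf G_{0_{\mathbf G}}\subseteq\mathbf F_{0_{\mathbf G}}$, and $\mathbf G_m=\mathbf F_m$ for $m\in\max\mathbf G$; $\mathrm{cut}(\mathbf F,\mathbf G)=\mathbf F_{0_{\mathbf G}}\setminus\mathbf G_{0_{\mathbf G}}$. $\varphi$ is a consistent family of foliage grafts for $\mathbf F$ if its members are foliage grafts for $\mathbf F$ with pairwise distinct skeletons forming a consistent family of grafts for $\mathrm{skel}\,\mathbf F$; $\mathrm{loss}(\mathbf F,\varphi)=\bigcup_{\mathbf G\in\varphi}\mathrm{cut}(\mathbf F,\mathbf G)$; $\mathrm{supp}(\mathbf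 F,\varphi)$ is the support of $\mathrm{skel}\,\mathbf F$ for the skeletons. $\mathrm{fhybr}(\mathbf F,\varphi)$ is the foliage tree $\mathbf H$ with skeleton $\mathrm{hybr}(\mathrm{skel}\,\mathbf F,\{\mathrm{skel}\,\mathbf G:\mathbf G\in\varphi\})$ and leaves $\mathbf H_x=\mathbf G_x\setminus\mathrm{loss}(\mathbf F,\varphi)$ for $x\in\mathrm{impl}\,\mathbf G$, $\mathbf H_x=\mathbf F_x\setminus\mathrm{loss}(\mathbf F,\varphi)$ for $x\in\mathrm{supp}(\mathbf F,\varphi)$. (A Baire foliage tree is nonincreasing, so the foliage grafts make sense.) *)

theory Defs
  imports "HOL-Analysis.Analysis" "HOL-Library.Sublist" "HOL-Library.Disjoint_Sets"
begin

text \<open>A tree is represented as a pair (set of nodes, strict order relation).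
  All trees (skeletons, grafts, hybrids) live over the same node type 'a.\<close>

type_synonym 'a tree = "'a set \<times> ('a \<Rightarrow> 'a \<Rightarrow> bool)"

definition nodes :: "'a tree \<Rightarrow> 'a set" where "nodes T = fst T"
definition tlt :: "'a tree \<Rightarrow> 'a \<Rightarrow> 'a \<Rightarrow> bool" where "tlt T = snd T"
definition tle :: "'a tree \<Rightarrow> 'a \<Rightarrow> 'a \<Rightarrow> bool" where
  "tle T x y \<longleftrightarrow> x = y \<or> tlt T x y"

definition preds :: "'a tree \<Rightarrow> 'a \<Rightarrow> 'a set" where
  "preds T x = {y. tlt T y x}"

definition is_tree :: "'a tree \<Rightarrow> bool" where
  "is_tree T \<longleftrightarrow>
     (\<forall>x y. tlt T x y \<longrightarrow> x \<in> nodes T \<and> y \<in> nodes T) \<and>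
     (\<forall>x. \<not> tlt T x x) \<and>
     (\<forall>x y z. tlt T x y \<longrightarrow> tlt T y z \<longrightarrow> tlt T x z) \<and>
     (\<forall>x\<in>nodes T.
        (\<forall>y\<in>preds T x. \<forall>z\<in>preds T x. y = z \<or> tlt T y z \<or> tlt T z y) \<and>
        (\<forall>S. S \<subseteq> preds T x \<longrightarrow> S \<noteq> {} \<longrightarrow> (\<exists>m\<in>S. \<forall>s\<in>S. \<not> tlt T s m)))"

definition incomp :: "'a tree \<Rightarrow> 'a \<Rightarrow> 'a \<Rightarrow> bool" where
  "incomp T x y \<longleftrightarrow> \<not> tle T x y \<and> \<not> tle T y x"

definition sons :: "'a tree \<Rightarrow> 'a \<Rightarrow> 'a set" where
  "sons T x = {y \<in> nodes T. tlt T x y \<and> \<not> (\<exists>z. tlt T x z \<and> tlt T z y)}"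

definition maxs :: "'a tree \<Rightarrow> 'a set" where
  "maxs T = {x \<in> nodes T. \<not> (\<exists>y. tlt T x y)}"

definition has_least :: "'a tree \<Rightarrow> bool" where
  "has_least T \<longleftrightarrow> (\<exists>r\<in>nodes T. \<forall>y\<in>nodes T. tle T r y)"

definition zero :: "'a tree \<Rightarrow> 'a" where
  "zero T = (THE r. r \<in> nodes T \<and> (\<forall>y\<in>nodes T. tle T r y))"

definition is_chain :: "'a tree \<Rightarrow> 'a set \<Rightarrow> bool" where
  "is_chain T C \<longleftrightarrow> C \<subseteq> nodes T \<and> (\<forall>x\<in>C. \<forall>y\<in>C. tle T x y \<or> tle T y x)"

definition is_branch :: "'a tree \<Rightarrow> 'a set \<Rightarrow> bool" where
  "is_branch T B \<longleftrightarrow> is_chain T B \<and> (\<forall>C. is_chain T C \<longrightarrow> B \<subseteq> C \<longrightarrow> C = B)"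

definition is_antichain :: "'a tree \<Rightarrow> 'a set \<Rightarrow> bool" where
  "is_antichain T A \<longleftrightarrow> A \<subseteq> nodes T \<and> (\<forall>x\<in>A. \<forall>y\<in>A. x \<noteq> y \<longrightarrow> incomp T x y)"

definition bounded_chains :: "'a tree \<Rightarrow> bool" where
  "bounded_chains T \<longleftrightarrow>
     (\<forall>C. is_chain T C \<longrightarrow> C \<noteq> {} \<longrightarrow> (\<exists>u\<in>nodes T. \<forall>c\<in>C. tle T c u))"

definition aleph0_branching :: "'a tree \<Rightarrow> bool" where
  "aleph0_branching T \<longleftrightarrow>
     (\<forall>x\<in>nodes T - maxs T. sons T x \<approx> (UNIV :: nat set))"

definition pred_order :: "'a tree \<Rightarrow> 'a \<Rightarrow> 'a rel" where
  "pred_order T x = {(y, z). y \<in> preds T x \<and> z \<in> preds T x \<and> tle T y z}"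

text \<open>height T \<le> omega, where height T is the least ordinal beta such that no node
  has predecessor set of order type beta. Since ordinals \<le> omega are exactly the
  order types of well-orders on subsets of nat that embed into natLeq, this says:
  some ordinal beta \<le> omega is not the order type of any predecessor set.\<close>
definition height_le_omega :: "'a tree \<Rightarrow> bool" where
  "height_le_omega T \<longleftrightarrow>
     (\<exists>\<beta> :: nat rel. Well_order \<beta> \<and> (\<beta>, natLeq) \<in> ordLeq \<and>
        (\<forall>x\<in>nodes T. (pred_order T x, \<beta>) \<notin> ordIso))"

definition down :: "'a tree \<Rightarrow> 'a set \<Rightarrow> 'a set" where
  "down T A = {v. \<exists>a\<in>A. tle T a v}"

definition troot :: "'a tree \<Rightarrow> 'a \<Rightarrow> 'a set \<Rightarrow> 'a" where
  "troot T x A = (THE r. r \<in> A \<and> tle T r x)"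

definition impl :: "'a tree \<Rightarrow> 'a set" where
  "impl G = nodes G - ({zero G} \<union> maxs G)"

definition is_graft :: "'a tree \<Rightarrow> 'a tree \<Rightarrow> bool" where
  "is_graft T G \<longleftrightarrow>
     is_tree G \<and> (\<exists>a\<in>nodes G. \<exists>b\<in>nodes G. a \<noteq> b) \<and>
     has_least G \<and> zero G \<in> nodes T \<and>
     maxs G \<subseteq> {v \<in> nodes T. tlt T (zero G) v} \<and>
     is_antichain T (maxs G) \<and>
     impl G \<inter> nodes T = {}"

definition expl :: "'a tree \<Rightarrow> 'a tree \<Rightarrow> 'a set" where
  "expl T G = {v. tlt T (zero G) v} - down T (maxs G)"

definition consistent_grafts :: "'a tree \<Rightarrow> 'a tree set \<Rightarrow> bool" where
  "consistent_grafts T \<gamma> \<longleftrightarrow>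
     (\<forall>G\<in>\<gamma>. is_graft T G) \<and>
     (\<forall>D\<in>\<gamma>. \<forall>E\<in>\<gamma>. D \<noteq> E \<longrightarrow>
        impl D \<inter> impl E = {} \<and>
        (incomp T (zero D) (zero E) \<or> zero D \<in> down T (maxs E) \<or> zero E \<in> down T (maxs D)))"

definition supp :: "'a tree \<Rightarrow> 'a tree set \<Rightarrow> 'a set" where
  "supp T \<gamma> = nodes T - (\<Union>G\<in>\<gamma>. expl T G)"

definition hybr :: "'a tree \<Rightarrow> 'a tree set \<Rightarrow> 'a tree" where
  "hybr T \<gamma> =
    (supp T \<gamma> \<union> (\<Union>G\<in>\<gamma>. impl G),
     \<lambda>x y.
       (x \<in> supp T \<gamma> \<and> y \<in> supp T \<gamma> \<and> tlt T x y) \<or>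
       (\<exists>G\<in>\<gamma>. x \<in> impl G \<and> y \<in> impl G \<and> tlt G x y) \<or>
       (\<exists>G\<in>\<gamma>. x \<in> supp T \<gamma> \<and> y \<in> impl G \<and> tle T x (zero G)) \<or>
       (\<exists>G\<in>\<gamma>. x \<in> impl G \<and> y \<in> supp T \<gamma> \<and> y \<in> down T (maxs G) \<and>
                tlt G x (troot T y (maxs G))) \<or>
       (\<exists>D\<in>\<gamma>. \<exists>E\<in>\<gamma>. D \<noteq> E \<and> x \<in> impl D \<and> y \<in> impl E \<and>
                zero E \<in> down T (maxs D) \<and> tlt D x (troot T (zero E) (maxs D))))"

type_synonym ('a, 'b) ftree = "'a tree \<times> ('a \<Rightarrow> 'b set)"

definition skel :: "('a, 'b) ftree \<Rightarrow> 'a tree" where "skel F = fst F"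
definition leaf :: "('a, 'b) ftree \<Rightarrow> 'a \<Rightarrow> 'b set" where "leaf F = snd F"

definition is_ftree :: "('a, 'b) ftree \<Rightarrow> bool" where
  "is_ftree F \<longleftrightarrow> is_tree (skel F)"

definition fruit :: "('a, 'b) ftree \<Rightarrow> 'a set \<Rightarrow> 'b set" where
  "fruit F A = (\<Inter>x\<in>A. leaf F x)"

definition nonincreasing :: "('a, 'b) ftree \<Rightarrow> bool" where
  "nonincreasing F \<longleftrightarrow>
     (\<forall>x\<in>nodes (skel F). \<forall>y\<in>nodes (skel F). tle (skel F) x y \<longrightarrow> leaf F y \<subseteq> leaf F x)"

definition locally_strict :: "('a, 'b) ftree \<Rightarrow> bool" where
  "locally_strict F \<longleftrightarrow>
     (\<forall>x\<in>nodes (skel F) - maxs (skel F).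
        disjoint_family_on (leaf F) (sons (skel F) x) \<and>
        leaf F x = (\<Union>s\<in>sons (skel F) x. leaf F s))"

definition strict_branches :: "('a, 'b) ftree \<Rightarrow> bool" where
  "strict_branches F \<longleftrightarrow>
     nodes (skel F) \<noteq> {} \<and>
     (\<forall>B. is_branch (skel F) B \<longrightarrow> (\<exists>p. fruit F B = {p}))"

definition open_in :: "'b topology \<Rightarrow> ('a, 'b) ftree \<Rightarrow> bool" where
  "open_in X F \<longleftrightarrow> (\<forall>x\<in>nodes (skel F). openin X (leaf F x))"

definition baire_skeleton :: "'a tree \<Rightarrow> bool" where
  "baire_skeleton T \<longleftrightarrow>
     (\<exists>f :: 'a \<Rightarrow> nat list. bij_betw f (nodes T) UNIV \<and>
        (\<forall>x\<in>nodes T. \<forall>y\<in>nodes T. tlt T x y \<longleftrightarrow> strict_prefix (f x) (f y)))"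

definition baire_ftree :: "'b topology \<Rightarrow> ('a, 'b) ftree \<Rightarrow> bool" where
  "baire_ftree X F \<longleftrightarrow>
     is_ftree F \<and> baire_skeleton (skel F) \<and> open_in X F \<and> locally_strict F \<and>
     strict_branches F \<and> leaf F (zero (skel F)) = topspace X"

definition is_fgraft :: "('a, 'b) ftree \<Rightarrow> ('a, 'b) ftree \<Rightarrow> bool" where
  "is_fgraft F G \<longleftrightarrow>
     is_ftree G \<and> nonincreasing G \<and> is_graft (skel F) (skel G) \<and>
     leaf G (zero (skel G)) \<subseteq> leaf F (zero (skel G)) \<and>
     (\<forall>m\<in>maxs (skel G). leaf G m = leaf F m)"

definition cut :: "('a, 'b) ftree \<Rightarrow> ('a, 'b) ftree \<Rightarrow> 'b set" where
  "cut F G = leaf F (zero (skel G)) - leaf G (zero (skel G))"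

definition consistent_fgrafts :: "('a, 'b) ftree \<Rightarrow> ('a, 'b) ftree set \<Rightarrow> bool" where
  "consistent_fgrafts F \<phi> \<longleftrightarrow>
     (\<forall>G\<in>\<phi>. is_fgraft F G) \<and> inj_on skel \<phi> \<and> consistent_grafts (skel F) (skel ` \<phi>)"

definition loss :: "('a, 'b) ftree \<Rightarrow> ('a, 'b) ftree set \<Rightarrow> 'b set" where
  "loss F \<phi> = (\<Union>G\<in>\<phi>. cut F G)"

definition fsupp :: "('a, 'b) ftree \<Rightarrow> ('a, 'b) ftree set \<Rightarrow> 'a set" where
  "fsupp F \<phi> = supp (skel F) (skel ` \<phi>)"

definition fhybr :: "('a, 'b) ftree \<Rightarrow> ('a, 'b) ftree set \<Rightarrow> ('a, 'b) ftree" where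
  "fhybr F \<phi> =
    (hybr (skel F) (skel ` \<phi>),
     \<lambda>x. if x \<in> fsupp F \<phi> then leaf F x - loss F \<phi>
         else leaf (THE G. G \<in> \<phi> \<and> x \<in> impl (skel G)) x - loss F \<phi>)"

end

theory Submission
  imports Defs
begin

lemma is_treeD:
  assumes "is_tree T"
  shows "\<forall>x y. tlt T x y \<longrightarrow> x \<in> nodes T \<and> y \<in> nodes T"
    and "\<forall>x. \<not> tlt T x x"
    and "\<forall>x y z. tlt T x y \<longrightarrow> tlt T y z \<longrightarrow> tlt T x z"
    and "\<forall>x\<in>nodes T. (\<forall>y\<in>preds T x. \<forall>z\<in>preds T x. y = z \<or> tlt T y z \<or> tlt T z y)"
    and "\<forall>x\<in>nodes T. (\<forall>S. S \<subseteq> preds T x \<longrightarrow> S \<noteq> {} \<longrightarrow> (\<exists>m\<in>S. \<forall>s\<in>S. \<not> tlt T s m))"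
  using assms unfolding is_tree_def by simp_all

lemma tree_field: assumes "is_tree T" "tlt T x y" shows "x \<in> nodes T \<and> y \<in> nodes T"
  using is_treeD(1)[OF assms(1)] assms(2) by blast
lemma tree_irrefl: assumes "is_tree T" shows "\<not> tlt T x x"
  using is_treeD(2)[OF assms(1)] by blast
lemma tree_trans: assumes "is_tree T" "tlt T x y" "tlt T y z" shows "tlt T x z"
  using is_treeD(3)[OF assms(1)] assms(2,3) by blast
lemma tree_asym: assumes "is_tree T" "tlt T x y" shows "\<not> tlt T y x"
  using tree_irrefl[OF assms(1)] tree_trans[OF assms(1) assms(2)] by blast
lemma tree_lin: assumes T: "is_tree T" and "tlt T a x" "tlt T b x" shows "a = b \<or> tlt T a b \<or> tlt T b a"
proof -
  have x: "x \<in> nodes T" using tree_field[OF T] assms(2) by blast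
  have "\<forall>y\<in>preds T x. \<forall>z\<in>preds T x. y = z \<or> tlt T y z \<or> tlt T z y"
    using is_treeD(4)[OF T] x by blast
  moreover have "a \<in> preds T x" "b \<in> preds T x" using assms(2,3) unfolding preds_def by auto
  ultimately show ?thesis by blast
qed
lemma tree_lin_le: assumes T: "is_tree T" and "tle T a x" "tle T b x" shows "tle T a b \<or> tle T b a"
proof (cases "a = x \<or> b = x")
  case True then show ?thesis using assms(2,3) unfolding tle_def by auto
next
  case False
  then have "tlt T a x" "tlt T b x" using assms(2,3) unfolding tle_def by auto
  then show ?thesis using tree_lin[OF T] unfolding tle_def by blast
qed

lemma sons_below_unique:
  assumes T: "is_tree T" and s1: "s1 \<in> sons T p" and s2: "s2 \<in> sons T p"
    and l1: "tle T s1 w" and l2: "tle T s2 w"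
  shows "s1 = s2"
proof -
  have "tle T s1 s2 \<or> tle T s2 s1" using tree_lin_le[OF T l1 l2] .
  moreover have "\<not> tlt T s1 s2" using s1 s2 unfolding sons_def by blast
  moreover have "\<not> tlt T s2 s1" using s1 s2 unfolding sons_def by blast
  ultimately show ?thesis unfolding tle_def by blast
qed

lemma finite_rel_max:
  assumes "finite S" "S \<noteq> {}" "\<And>x. \<not> R x x" "\<And>x y z. R x y \<Longrightarrow> R y z \<Longrightarrow> R x z"
    "\<And>x y. x \<in> S \<Longrightarrow> y \<in> S \<Longrightarrow> x = y \<or> R x y \<or> R y x"
  shows "\<exists>m\<in>S. \<forall>s\<in>S. s = m \<or> R s m"
  using assms(1,2,5)
proof (induction S rule: finite_ne_induct)
  case (singleton x) then show ?case by auto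
next
  case (insert x F)
  then obtain m where m: "m \<in> F" "\<forall>s\<in>F. s = m \<or> R s m" by auto
  have "x = m \<or> R x m \<or> R m x" using insert.prems m(1) by auto
  then consider "x = m \<or> R x m" | "R m x" by blast
  then show ?case
  proof cases
    case 1 then show ?thesis using m by auto
  next
    case 2
    have "\<forall>s\<in>insert x F. s = x \<or> R s x"
    proof
      fix s assume "s \<in> insert x F"
      then consider "s = x" | "s \<in> F" by blast
      then show "s = x \<or> R s x"
      proof cases
        case 2 then have "s = m \<or> R s m" using m by blast
        then show ?thesis using \<open>R m x\<close> assms(4) by blast
      qed simp
    qed
    then show ?thesis by blast
  qed
qed

lemma finite_rel_min:
  assumes "finite S" "S \<noteq> {}" "\<And>x. \<not> R x x" "\<And>x y z. R x y \<Longrightarrow> R y z \<Longrightarrow> R x z"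
  shows "\<exists>m\<in>S. \<forall>s\<in>S. \<not> R s m"
  using assms(1,2)
proof (induction S rule: finite_ne_induct)
  case (singleton x) then show ?case using assms(3) by auto
next
  case (insert x F)
  then obtain m where m: "m \<in> F" "\<forall>s\<in>F. \<not> R s m" by auto
  show ?case
  proof (cases "R x m")
    case True
    have "\<forall>s\<in>insert x F. \<not> R s x"
    proof
      fix s assume "s \<in> insert x F"
      then consider "s = x" | "s \<in> F" by blast
      then show "\<not> R s x"
      proof cases
        case 1 then show ?thesis using assms(3) by simp
      next
        case 2 then show ?thesis using m True assms(4) by blast
      qed
    qed
    then show ?thesis by blast
  next
    case False
    then show ?thesis using m by auto
  qed
qed

lemma preds_sub: assumes "is_tree T" "tlt T y x" shows "preds T y \<subseteq> preds T x"
  unfolding preds_def using tree_trans[OF assms(1) _ assms(2)] by blast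

lemma list_trich: "a = b \<or> strict_prefix a b \<or> strict_prefix b a \<or> parallel a b"
  by (auto simp: parallel_def strict_prefix_def)

section \<open>From a nice tree to a Baire skeleton\<close>

lemma baire_skeleton_intro:
  assumes T: "is_tree T" and r: "r \<in> nodes T" "\<forall>y\<in>nodes T. tle T r y"
    and fin: "\<forall>x\<in>nodes T. finite (preds T x)"
    and sns: "\<forall>x\<in>nodes T. sons T x \<approx> (UNIV::nat set)"
  shows "baire_skeleton T"
proof -
  have "\<forall>x\<in>nodes T. \<exists>e. bij_betw e (UNIV::nat set) (sons T x)"
    using sns eqpoll_sym unfolding eqpoll_def by blast
  then obtain en where en: "\<And>x. x \<in> nodes T \<Longrightarrow> bij_betw (en x) (UNIV::nat set) (sons T x)"
    by metis
  define g where "g xs = fold (\<lambda>n v. en v n) xs r" for xs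
  have g_snoc: "g (xs @ [n]) = en (g xs) n" for xs n by (simp add: g_def)
  have g_nil: "g [] = r" by (simp add: g_def)
  have g_nodes: "g xs \<in> nodes T" for xs
  proof (induction xs rule: rev_induct)
    case Nil then show ?case using g_nil r by simp
  next
    case (snoc n xs)
    then have "en (g xs) n \<in> sons T (g xs)" using en bij_betwE by blast
    then show ?case unfolding g_snoc sons_def by blast
  qed
  have g_son: "g (xs @ [n]) \<in> sons T (g xs)" for xs n
    using en[OF g_nodes] bij_betwE unfolding g_snoc by blast
  have g_lt: "ys \<noteq> [] \<Longrightarrow> tlt T (g xs) (g (xs @ ys))" for xs ys
  proof (induction ys rule: rev_induct)
    case Nil then show ?case by simp
  next
    case (snoc n ys)
    have 1: "tlt T (g (xs @ ys)) (g (xs @ ys @ [n]))"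
      using g_son[of "xs @ ys" n] unfolding sons_def by simp
    show ?case
    proof (cases "ys = []")
      case True then show ?thesis using 1 by simp
    next
      case False then show ?thesis using snoc.IH 1 tree_trans[OF T] by (metis append_assoc)
    qed
  qed
  have g_sp: "strict_prefix a b \<Longrightarrow> tlt T (g a) (g b)" for a b
  proof -
    assume "strict_prefix a b"
    then obtain z zs where "b = a @ z # zs" by (rule strict_prefixE')
    then show ?thesis using g_lt[of "z # zs" a] by simp
  qed
  have g_par: "parallel a b \<Longrightarrow> \<not> tle T (g a) (g b)" for a b
  proof
    assume "parallel a b" "tle T (g a) (g b)"
    then obtain c i as j bs where ij: "i \<noteq> j" "a = c @ i # as" "b = c @ j # bs"
      using parallel_decomp by blast
    have s1: "g (c @ [i]) \<in> sons T (g c)" and s2: "g (c @ [j]) \<in> sons T (g c)"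
      using g_son by auto
    have l1: "tle T (g (c @ [i])) (g a)"
      using g_lt[of as "c @ [i]"] ij unfolding tle_def by (cases "as = []") auto
    have l2: "tle T (g (c @ [j])) (g b)"
      using g_lt[of bs "c @ [j]"] ij unfolding tle_def by (cases "bs = []") auto
    have l1': "tle T (g (c @ [i])) (g b)"
      using l1 \<open>tle T (g a) (g b)\<close> tree_trans[OF T] unfolding tle_def by metis
    have "g (c @ [i]) = g (c @ [j])" using sons_below_unique[OF T s1 s2 l1' l2] .
    then have "en (g c) i = en (g c) j" by (simp add: g_snoc)
    then show False using en[OF g_nodes[of c]] ij(1) unfolding bij_betw_def inj_on_def by blast
  qed
  have g_iff: "tlt T (g a) (g b) \<longleftrightarrow> strict_prefix a b" for a b
  proof
    assume lt: "tlt T (g a) (g b)"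
    show "strict_prefix a b"
    proof (rule ccontr)
      assume ns: "\<not> strict_prefix a b"
      consider "a = b" | "strict_prefix b a" | "parallel a b"
        using ns list_trich by blast
      then show False
      proof cases
        case 1 then show ?thesis using lt tree_irrefl[OF T] by simp
      next
        case 2 then show ?thesis using lt g_sp tree_asym[OF T] by blast
      next
        case 3 then show ?thesis using lt g_par unfolding tle_def by blast
      qed
    qed
  qed (rule g_sp)
  have g_inj: "inj g"
  proof
    fix a b assume eq: "g a = g b"
    show "a = b"
    proof (rule ccontr)
      assume "a \<noteq> b"
      then consider "strict_prefix a b" | "strict_prefix b a" | "parallel a b"
        using list_trich by blast
      then show False
      proof cases
        case 1 then show ?thesis using g_sp[of a b] eq tree_irrefl[OF T] by simp
      next
        case 2 then show ?thesis using g_sp[of b a] eq tree_irrefl[OF T] by simp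
      next
        case 3 then show ?thesis using g_par[of a b] eq unfolding tle_def by simp
      qed
    qed
  qed
  have g_surj: "\<forall>x\<in>nodes T. \<exists>a. g a = x"
  proof
    fix x assume "x \<in> nodes T"
    then show "\<exists>a. g a = x"
    proof (induction "card (preds T x)" arbitrary: x rule: less_induct)
      case less
      show ?case
      proof (cases "x = r")
        case True then show ?thesis using g_nil by blast
      next
        case False
        then have rx: "r \<in> preds T x" using r less.prems unfolding tle_def preds_def by auto
        have "\<exists>m\<in>preds T x. \<forall>s\<in>preds T x. s = m \<or> tlt T s m"
        proof (rule finite_rel_max)
          show "finite (preds T x)" using fin less.prems by blast
          show "preds T x \<noteq> {}" using rx by blast
          show "\<not> tlt T y y" for y using tree_irrefl[OF T] .
          show "tlt T y z \<Longrightarrow> tlt T z w \<Longrightarrow> tlt T y w" for y z w using tree_trans[OF T] .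
          show "y \<in> preds T x \<Longrightarrow> z \<in> preds T x \<Longrightarrow> y = z \<or> tlt T y z \<or> tlt T z y" for y z
            using tree_lin[OF T] unfolding preds_def by blast
        qed
        then obtain p where p: "p \<in> preds T x" "\<forall>s\<in>preds T x. s = p \<or> tlt T s p" by blast
        have pn: "p \<in> nodes T" using p(1) tree_field[OF T] unfolding preds_def by blast
        have ps: "preds T p \<subset> preds T x"
          using preds_sub[OF T] p(1) tree_irrefl[OF T] unfolding preds_def by blast
        have "card (preds T p) < card (preds T x)"
          using psubset_card_mono fin less.prems ps by blast
        then obtain a where a: "g a = p" using less.hyps pn by blast
        have "x \<in> sons T p"
        proof -
          have "\<not> (\<exists>z. tlt T p z \<and> tlt T z x)"
          proof
            assume "\<exists>z. tlt T p z \<and> tlt T z x"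
            then obtain z where z: "tlt T p z" "tlt T z x" by blast
            then have "z = p \<or> tlt T z p" using p(2) unfolding preds_def by blast
            then show False using z(1) tree_asym[OF T] tree_irrefl[OF T] by blast
          qed
          then show ?thesis unfolding sons_def using less.prems p(1) unfolding preds_def by blast
        qed
        then obtain n where "en p n = x" using en[OF pn] unfolding bij_betw_def by (metis imageE)
        then show ?thesis using a g_snoc by metis
      qed
    qed
  qed
  have gb: "bij_betw g UNIV (nodes T)"
    unfolding bij_betw_def using g_inj g_nodes g_surj by auto
  define f where "f = the_inv_into UNIV g"
  have fb: "bij_betw f (nodes T) UNIV" unfolding f_def using bij_betw_the_inv_into[OF gb] .
  have gf: "x \<in> nodes T \<Longrightarrow> g (f x) = x" for x
    unfolding f_def using gb f_the_inv_into_f_bij_betw by metis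
  show ?thesis unfolding baire_skeleton_def
  proof (intro exI conjI ballI)
    show "bij_betw f (nodes T) UNIV" by (rule fb)
    fix x y assume "x \<in> nodes T" "y \<in> nodes T"
    then show "tlt T x y = strict_prefix (f x) (f y)" using g_iff gf by metis
  qed
qed

section \<open>Properties of Baire skeletons\<close>

lemma baire_skel_g:
  assumes "baire_skeleton T"
  obtains g :: "nat list \<Rightarrow> 'a" where "\<And>a. g a \<in> nodes T" "\<And>x. x \<in> nodes T \<Longrightarrow> \<exists>a. x = g a"
    "inj g" "\<And>a b. tlt T (g a) (g b) \<longleftrightarrow> strict_prefix a b"
proof -
  obtain f :: "'a \<Rightarrow> nat list" where f: "bij_betw f (nodes T) UNIV"
    "\<forall>x\<in>nodes T. \<forall>y\<in>nodes T. tlt T x y \<longleftrightarrow> strict_prefix (f x) (f y)"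
    using assms unfolding baire_skeleton_def by blast
  define g where "g = inv_into (nodes T) f"
  have gb: "bij_betw g UNIV (nodes T)" unfolding g_def using bij_betw_inv_into[OF f(1)] .
  have fg: "f (g a) = a" for a unfolding g_def using f(1) by (simp add: bij_betw_inv_into_right)
  have gn: "g a \<in> nodes T" for a using gb bij_betwE by blast
  show ?thesis
  proof
    show "g a \<in> nodes T" for a by (rule gn)
    show "x \<in> nodes T \<Longrightarrow> \<exists>a. x = g a" for x using gb unfolding bij_betw_def by auto
    show "inj g" using gb unfolding bij_betw_def by blast
    show "tlt T (g a) (g b) \<longleftrightarrow> strict_prefix a b" for a b using f(2) gn fg by metis
  qed
qed

locale bskel =
  fixes T :: "'a tree" and g :: "nat list \<Rightarrow> 'a"
  assumes T: "is_tree T"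
    and gn: "\<And>a. g a \<in> nodes T" and gs: "\<And>x. x \<in> nodes T \<Longrightarrow> \<exists>a. x = g a"
    and ginj: "inj g" and giff: "\<And>a b. tlt T (g a) (g b) \<longleftrightarrow> strict_prefix a b"
begin

lemma gle: "tle T (g a) (g b) \<longleftrightarrow> prefix a b"
  unfolding tle_def using giff ginj by (metis injD prefix_order.order_iff_strict)

lemma preds_g: "preds T (g a) = g ` {b. strict_prefix b a}"
proof
  show "preds T (g a) \<subseteq> g ` {b. strict_prefix b a}"
  proof
    fix y assume "y \<in> preds T (g a)"
    then have y: "tlt T y (g a)" unfolding preds_def by simp
    then obtain b where "y = g b" using gs tree_field[OF T y] by blast
    then show "y \<in> g ` {b. strict_prefix b a}" using y giff by auto
  qed
  show "g ` {b. strict_prefix b a} \<subseteq> preds T (g a)" unfolding preds_def using giff by auto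
qed

lemma fin_preds: "x \<in> nodes T \<Longrightarrow> finite (preds T x)"
proof -
  assume "x \<in> nodes T"
  then obtain a where "x = g a" using gs by blast
  moreover have "finite {b. strict_prefix b a}"
    by (rule finite_subset[of _ "set (prefixes a)"]) (auto simp: strict_prefix_def)
  ultimately show ?thesis using preds_g by simp
qed

lemma sons_g: "sons T (g a) = range (\<lambda>n. g (a @ [n]))"
proof
  show "sons T (g a) \<subseteq> range (\<lambda>n. g (a @ [n]))"
  proof
    fix y assume y: "y \<in> sons T (g a)"
    then obtain b where b: "y = g b" using gs unfolding sons_def by blast
    then have sp: "strict_prefix a b" using y giff unfolding sons_def by blast
    then obtain z zs where bz: "b = a @ z # zs" by (rule strict_prefixE')
    have "zs = []"
    proof (rule ccontr)
      assume "zs \<noteq> []"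
      then have "strict_prefix a (a @ [z])" "strict_prefix (a @ [z]) b" using bz
        by (auto simp: strict_prefix_def prefix_def)
      then show False using y b giff unfolding sons_def by blast
    qed
    then show "y \<in> range (\<lambda>n. g (a @ [n]))" using b bz by simp
  qed
  show "range (\<lambda>n. g (a @ [n])) \<subseteq> sons T (g a)"
  proof
    fix y assume "y \<in> range (\<lambda>n. g (a @ [n]))"
    then obtain n where yn: "y = g (a @ [n])" by blast
    have "\<not> (\<exists>z. tlt T (g a) z \<and> tlt T z y)"
    proof
      assume "\<exists>z. tlt T (g a) z \<and> tlt T z y"
      then obtain z where z: "tlt T (g a) z" "tlt T z y" by blast
      then obtain c where c: "z = g c" using gs tree_field[OF T] by metis
      have "strict_prefix a c" "strict_prefix c (a @ [n])" using z c yn giff by auto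
      then show False
        by (metis append_self_conv2 not_Cons_self2 prefix_order.dual_order.strict_trans1 strict_prefixE'
            strict_prefix_def prefix_def prefix_snoc snoc_eq_iff_butlast)
    qed
    then show "y \<in> sons T (g a)" unfolding sons_def using yn gn giff
      by (simp add: strict_prefix_def prefix_def)
  qed
qed

lemma sons_eqpoll: "x \<in> nodes T \<Longrightarrow> sons T x \<approx> (UNIV :: nat set)"
proof -
  assume "x \<in> nodes T"
  then obtain a where a: "x = g a" using gs by blast
  have "inj (\<lambda>n. g (a @ [n]))" by (rule injI) (metis ginj injD append1_eq_conv)
  then have "bij_betw (\<lambda>n. g (a @ [n])) UNIV (sons T x)" unfolding a sons_g bij_betw_def by simp
  then show ?thesis using eqpoll_sym eqpoll_def by blast
qed

lemma root: "g [] \<in> nodes T" "\<And>y. y \<in> nodes T \<Longrightarrow> tle T (g []) y"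
proof -
  show "g [] \<in> nodes T" by (rule gn)
  fix y assume "y \<in> nodes T"
  then obtain a where "y = g a" using gs by blast
  then show "tle T (g []) y" using gle by simp
qed

lemma zero_eq: "zero T = g []"
  unfolding zero_def
proof (rule the_equality)
  show "g [] \<in> nodes T \<and> (\<forall>y\<in>nodes T. tle T (g []) y)" using root by blast
  fix r assume r: "r \<in> nodes T \<and> (\<forall>y\<in>nodes T. tle T r y)"
  then have "tle T r (g [])" "tle T (g []) r" using root by auto
  then show "r = g []" using tree_asym[OF T] unfolding tle_def by blast
qed

lemma no_maxs: "maxs T = {}"
proof -
  have "\<exists>y. tlt T x y" if xn: "x \<in> nodes T" for x
  proof -
    obtain a where "x = g a" using gs[OF xn] by blast
    then have "tlt T x (g (a @ [0]))" using giff by (simp add: strict_prefix_def)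
    then show ?thesis by blast
  qed
  then show ?thesis unfolding maxs_def by blast
qed

lemma nonincr:
  assumes ls: "locally_strict F" and sk: "skel F = T"
  shows "nonincreasing F"
proof -
  have son_sub: "leaf F (g (a @ [n])) \<subseteq> leaf F (g a)" for a n
  proof -
    have "g a \<in> nodes T - maxs T" using gn no_maxs by simp
    then have "leaf F (g a) = (\<Union>s\<in>sons T (g a). leaf F s)" using ls sk unfolding locally_strict_def by blast
    then show ?thesis using sons_g by auto
  qed
  have app: "leaf F (g (a @ d)) \<subseteq> leaf F (g a)" for a d
  proof (induction d rule: rev_induct)
    case Nil then show ?case by simp
  next
    case (snoc n d)
    then show ?case using son_sub[of "a @ d" n] by auto
  qed
  show ?thesis unfolding nonincreasing_def
  proof (intro ballI impI)
    fix x y assume x: "x \<in> nodes (skel F)" and y: "y \<in> nodes (skel F)" and "tle (skel F) x y"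
    then obtain a b where ab: "x = g a" "y = g b" "prefix a b" using gs gle sk by metis
    then obtain d where "b = a @ d" unfolding prefix_def by blast
    then show "leaf F y \<subseteq> leaf F x" using ab app by simp
  qed
qed

lemma disj:
  assumes ls: "locally_strict F" and sk: "skel F = T"
    and x: "x \<in> nodes T" and y: "y \<in> nodes T" and inc: "\<not> tle T x y" "\<not> tle T y x"
  shows "leaf F x \<inter> leaf F y = {}"
proof -
  obtain a b where ab: "x = g a" "y = g b" using gs x y by metis
  then have "parallel a b" using inc gle by (auto simp: parallel_def)
  then obtain c i as j bs where ij: "i \<noteq> j" "a = c @ i # as" "b = c @ j # bs"
    using parallel_decomp by blast
  have ni: "nonincreasing F" using nonincr ls sk .
  have "tle T (g (c @ [i])) x" "tle T (g (c @ [j])) y" using ab ij gle by auto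
  then have sub: "leaf F x \<subseteq> leaf F (g (c @ [i]))" "leaf F y \<subseteq> leaf F (g (c @ [j]))"
    using ni x y gn sk unfolding nonincreasing_def by auto
  have "g c \<in> nodes T - maxs T" using gn no_maxs by simp
  then have df: "disjoint_family_on (leaf F) (sons T (g c))" using ls sk unfolding locally_strict_def by blast
  have "g (c @ [i]) \<noteq> g (c @ [j])" using ij(1) ginj unfolding inj_def by auto
  then have "leaf F (g (c @ [i])) \<inter> leaf F (g (c @ [j])) = {}"
    using df sons_g unfolding disjoint_family_on_def by auto
  then show ?thesis using sub by blast
qed

end

section \<open>Height at most omega gives finite predecessor sets\<close>

lemma pred_order_dir_image:
  assumes T: "is_tree T" and py: "preds T y = e ` S"
    and mono: "\<And>i j. i \<in> S \<Longrightarrow> j \<in> S \<Longrightarrow> tlt T (e i) (e j) \<longleftrightarrow> i < j"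
  shows "pred_order T y = dir_image (Restr natLeq S) e"
proof -
  have le: "tle T (e i) (e j) \<longleftrightarrow> i \<le> j" if "i \<in> S" "j \<in> S" for i j
  proof
    assume "tle T (e i) (e j)"
    then consider "e i = e j" | "tlt T (e i) (e j)" unfolding tle_def by blast
    then show "i \<le> j"
    proof cases
      case 1
      show ?thesis
      proof (rule ccontr)
        assume "\<not> i \<le> j"
        then have "tlt T (e j) (e i)" using mono that by simp
        then show False using 1 tree_irrefl[OF T] by simp
      qed
    next
      case 2 then show ?thesis using mono that by simp
    qed
  next
    assume "i \<le> j"
    then show "tle T (e i) (e j)" using mono that unfolding tle_def by (cases "i = j") auto
  qed
  show ?thesis
    unfolding pred_order_def dir_image_def natLeq_def py
    using le by auto
qed

lemma height_fin_preds:
  assumes G: "is_tree G" and h: "height_le_omega G" and x: "x \<in> nodes G"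
  shows "finite (preds G x)"
proof (rule ccontr)
  assume inf: "infinite (preds G x)"
  define P where "P = preds G x"
  have wfP: "\<And>S. S \<subseteq> P \<Longrightarrow> S \<noteq> {} \<Longrightarrow> \<exists>m\<in>S. \<forall>s\<in>S. \<not> tlt G s m"
    using is_treeD(5)[OF G] x unfolding P_def by blast
  have linP: "\<And>u v. u \<in> P \<Longrightarrow> v \<in> P \<Longrightarrow> u = v \<or> tlt G u v \<or> tlt G v u"
    using is_treeD(4)[OF G] x unfolding P_def by blast
  have Pdown: "\<And>u v. u \<in> P \<Longrightarrow> tlt G v u \<Longrightarrow> v \<in> P"
    unfolding P_def preds_def using tree_trans[OF G] by blast
  have infP: "infinite P" using inf P_def by simp
  define e where "e = rec_nat (SOME m. m \<in> P \<and> (\<forall>s\<in>P. \<not> tlt G s m))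
     (\<lambda>n en. SOME m. m \<in> P \<and> tlt G en m \<and> (\<forall>s\<in>P. tlt G en s \<longrightarrow> \<not> tlt G s m))"
  have e0: "e 0 = (SOME m. m \<in> P \<and> (\<forall>s\<in>P. \<not> tlt G s m))" unfolding e_def by simp
  have eS: "e (Suc n) = (SOME m. m \<in> P \<and> tlt G (e n) m \<and> (\<forall>s\<in>P. tlt G (e n) s \<longrightarrow> \<not> tlt G s m))"
    for n unfolding e_def by simp
  have einv: "e n \<in> P \<and> preds G (e n) = e ` {..<n}" for n
  proof (induction n)
    case 0
    have "P \<noteq> {}" using infP by auto
    then have "\<exists>m. m \<in> P \<and> (\<forall>s\<in>P. \<not> tlt G s m)" using wfP[of P] by blast
    then have "e 0 \<in> P \<and> (\<forall>s\<in>P. \<not> tlt G s (e 0))" unfolding e0 by (rule someI_ex)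
    then have m: "e 0 \<in> P" "\<forall>s\<in>P. \<not> tlt G s (e 0)" by auto
    have "preds G (e 0) = {}" using m Pdown unfolding preds_def by blast
    then show ?case using m by simp
  next
    case (Suc n)
    define S where "S = {m \<in> P. tlt G (e n) m}"
    have "S \<noteq> {}"
    proof
      assume "S = {}"
      have "P \<subseteq> insert (e n) (preds G (e n))"
      proof
        fix w assume wP: "w \<in> P"
        then have "\<not> tlt G (e n) w" using \<open>S = {}\<close> unfolding S_def by blast
        then have "w = e n \<or> tlt G w (e n)" using linP[OF wP] Suc.IH by blast
        then show "w \<in> insert (e n) (preds G (e n))" unfolding preds_def by blast
      qed
      then have "finite P" using Suc.IH finite_subset by auto
      then show False using infP by simp
    qed
    then obtain m0 where "m0 \<in> S" "\<forall>s\<in>S. \<not> tlt G s m0" using wfP[of S] unfolding S_def by blast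
    then have "\<exists>m. m \<in> P \<and> tlt G (e n) m \<and> (\<forall>s\<in>P. tlt G (e n) s \<longrightarrow> \<not> tlt G s m)"
      unfolding S_def by blast
    then have "e (Suc n) \<in> P \<and> tlt G (e n) (e (Suc n)) \<and>
      (\<forall>s\<in>P. tlt G (e n) s \<longrightarrow> \<not> tlt G s (e (Suc n)))"
      unfolding eS by (rule someI_ex)
    then have m: "e (Suc n) \<in> P" "tlt G (e n) (e (Suc n))"
      "\<forall>s\<in>P. tlt G (e n) s \<longrightarrow> \<not> tlt G s (e (Suc n))" by auto
    have "preds G (e (Suc n)) = e ` {..<Suc n}"
    proof
      show "preds G (e (Suc n)) \<subseteq> e ` {..<Suc n}"
      proof
        fix w assume "w \<in> preds G (e (Suc n))"
        then have w: "tlt G w (e (Suc n))" unfolding preds_def by simp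
        then have wP: "w \<in> P" using Pdown m(1) by blast
        consider "w = e n" | "tlt G w (e n)" | "tlt G (e n) w" using linP[OF wP] Suc.IH by blast
        then show "w \<in> e ` {..<Suc n}"
        proof cases
          case 1 then show ?thesis by simp
        next
          case 2 then have "w \<in> e ` {..<n}" using Suc.IH unfolding preds_def by blast
          then show ?thesis by auto
        next
          case 3 then show ?thesis using m(3) wP w by blast
        qed
      qed
      show "e ` {..<Suc n} \<subseteq> preds G (e (Suc n))"
      proof
        fix w assume "w \<in> e ` {..<Suc n}"
        then consider "w = e n" | "w \<in> e ` {..<n}" by (auto simp: less_Suc_eq)
        then show "w \<in> preds G (e (Suc n))"
        proof cases
          case 1 then show ?thesis using m(2) unfolding preds_def by simp
        next
          case 2 then have "tlt G w (e n)" using Suc.IH unfolding preds_def by blast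
          then show ?thesis using m(2) tree_trans[OF G] unfolding preds_def by blast
        qed
      qed
    qed
    then show ?case using m(1) by simp
  qed
  have emono: "tlt G (e i) (e j) \<longleftrightarrow> i < j" for i j
  proof
    assume "i < j"
    then have "e i \<in> preds G (e j)" using einv[of j] by blast
    then show "tlt G (e i) (e j)" unfolding preds_def by simp
  next
    assume lt: "tlt G (e i) (e j)"
    show "i < j"
    proof (rule ccontr)
      assume "\<not> i < j"
      then consider "i = j" | "j < i" by linarith
      then show False
      proof cases
        case 1 then show ?thesis using lt tree_irrefl[OF G] by simp
      next
        case 2
        then have "e j \<in> preds G (e i)" using einv[of i] by blast
        then show ?thesis using lt tree_asym[OF G] unfolding preds_def by blast
      qed
    qed
  qed
  have einj: "inj e"
  proof
    fix i j assume "e i = e j"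
    show "i = j"
    proof (rule ccontr)
      assume "i \<noteq> j"
      then consider "i < j" | "j < i" by linarith
      then show False using emono[of i j] emono[of j i] tree_irrefl[OF G] \<open>e i = e j\<close> by (cases; simp)
    qed
  qed
  obtain \<beta> :: "nat rel" where b: "Well_order \<beta>" "(\<beta>, natLeq) \<in> ordLeq"
    "\<forall>y\<in>nodes G. (pred_order G y, \<beta>) \<notin> ordIso"
    using h unfolding height_le_omega_def by blast
  have key: "(\<beta>, Restr natLeq S) \<in> ordIso \<Longrightarrow> y \<in> nodes G \<Longrightarrow> preds G y = e ` S \<Longrightarrow> False" for S y
  proof -
    assume bS: "(\<beta>, Restr natLeq S) \<in> ordIso" and yn: "y \<in> nodes G" and py: "preds G y = e ` S"
    have wo: "Well_order (Restr natLeq S)" using Well_order_Restr natLeq_Well_order by blast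
    have "inj_on e (Field (Restr natLeq S))" using einj by (simp add: inj_on_def inj_def)
    then have "(Restr natLeq S, dir_image (Restr natLeq S) e) \<in> ordIso"
      using dir_image_ordIso[OF wo] by blast
    moreover have "pred_order G y = dir_image (Restr natLeq S) e"
      using pred_order_dir_image[OF G py] emono by blast
    ultimately have "(Restr natLeq S, pred_order G y) \<in> ordIso" by simp
    then have "(\<beta>, pred_order G y) \<in> ordIso"
      using bS ordIso_transitive by blast
    then show False using b(3) yn ordIso_symmetric by blast
  qed
  have "(\<beta>, natLeq) \<in> ordLess \<or> (\<beta>, natLeq) \<in> ordIso" using b(2) ordLeq_iff_ordLess_or_ordIso by blast
  then show False
  proof
    assume "(\<beta>, natLeq) \<in> ordLess"
    then obtain a where a: "(\<beta>, Restr natLeq (underS natLeq a)) \<in> ordIso"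
      using ordLess_iff_ordIso_Restr[OF natLeq_Well_order b(1)] by blast
    have en: "e a \<in> nodes G" using einv[of a] tree_field[OF G] x unfolding P_def preds_def by blast
    have "preds G (e a) = e ` {k. k < a}" using einv[of a] by (simp add: lessThan_def)
    then show False using key[of "{k. k < a}" "e a"] a en natLeq_underS_less by simp
  next
    assume bn: "(\<beta>, natLeq) \<in> ordIso"
    define S' where "S' = {w \<in> P. \<forall>n. tlt G (e n) w}"
    obtain y where y: "y \<in> nodes G" "\<forall>n. tlt G (e n) y" "\<forall>w\<in>S'. \<not> tlt G w y" "y \<in> P \<or> y = x"
    proof (cases "S' = {}")
      case True
      have "tlt G (e n) x" for n using einv[of n] unfolding P_def preds_def by blast
      then show ?thesis using that[of x] x True by blast
    next
      case False
      then obtain m where "m \<in> S'" "\<forall>s\<in>S'. \<not> tlt G s m" using wfP[of S'] unfolding S'_def by blast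
      moreover have "m \<in> nodes G" using \<open>m \<in> S'\<close> tree_field[OF G] unfolding S'_def P_def preds_def by blast
      ultimately show ?thesis using that[of m] unfolding S'_def by blast
    qed
    have yP: "preds G y \<subseteq> P"
    proof
      fix w assume "w \<in> preds G y"
      then have w: "tlt G w y" unfolding preds_def by simp
      show "w \<in> P"
      proof (cases "y = x")
        case True then show ?thesis using w unfolding P_def preds_def by simp
      next
        case False
        then show ?thesis using y(4) w Pdown by blast
      qed
    qed
    have "preds G y = e ` UNIV"
    proof
      show "preds G y \<subseteq> e ` UNIV"
      proof
        fix w assume wy: "w \<in> preds G y"
        then have wP: "w \<in> P" using yP by blast
        have "\<not> (\<forall>n. tlt G (e n) w)"
        proof
          assume "\<forall>n. tlt G (e n) w"
          then have "w \<in> S'" unfolding S'_def using wP by blast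
          then show False using y(3) wy unfolding preds_def by blast
        qed
        then obtain n where n: "\<not> tlt G (e n) w" by blast
        then have "w = e n \<or> tlt G w (e n)" using linP[OF wP] einv[of n] by blast
        then show "w \<in> e ` UNIV" using einv[of n] unfolding preds_def by blast
      qed
      show "e ` UNIV \<subseteq> preds G y" using y(2) unfolding preds_def by blast
    qed
    then show False using key[of UNIV y] y(1) bn by simp
  qed
qed

section \<open>Basic facts on grafts\<close>

lemma zero_least:
  assumes G: "is_tree G" and hl: "has_least G"
  shows "zero G \<in> nodes G" "\<And>y. y \<in> nodes G \<Longrightarrow> tle G (zero G) y"
proof -
  obtain r where r: "r \<in> nodes G" "\<forall>y\<in>nodes G. tle G r y" using hl unfolding has_least_def by blast
  have "zero G = r" unfolding zero_def
  proof (rule the_equality)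
    show "r \<in> nodes G \<and> (\<forall>y\<in>nodes G. tle G r y)" using r by blast
    fix r' assume r': "r' \<in> nodes G \<and> (\<forall>y\<in>nodes G. tle G r' y)"
    then have "tle G r' r" "tle G r r'" using r by auto
    then show "r' = r" using tree_asym[OF G] unfolding tle_def by blast
  qed
  then show "zero G \<in> nodes G" "\<And>y. y \<in> nodes G \<Longrightarrow> tle G (zero G) y" using r by auto
qed

locale hyb = bskel T g for T :: "'a tree" and g +
  fixes \<Gamma> :: "'a tree set"
  assumes cons: "consistent_grafts T \<Gamma>"
    and Gfin: "\<And>G x. G \<in> \<Gamma> \<Longrightarrow> x \<in> nodes G \<Longrightarrow> finite (preds G x)"
    and Gbr: "\<And>G. G \<in> \<Gamma> \<Longrightarrow> aleph0_branching G"
begin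

abbreviation "S \<equiv> supp T \<Gamma>"
abbreviation "H \<equiv> hybr T \<Gamma>"

lemma graft: "G \<in> \<Gamma> \<Longrightarrow> is_graft T G"
  using cons unfolding consistent_grafts_def by blast

lemma Gtree: "G \<in> \<Gamma> \<Longrightarrow> is_tree G"
  using graft unfolding is_graft_def by blast

lemma Gzero: assumes "G \<in> \<Gamma>" shows "zero G \<in> nodes G" "\<And>y. y \<in> nodes G \<Longrightarrow> tle G (zero G) y"
  using zero_least[OF Gtree[OF assms]] graft[OF assms] unfolding is_graft_def by auto

lemma zeroT: "G \<in> \<Gamma> \<Longrightarrow> zero G \<in> nodes T"
  using graft unfolding is_graft_def by blast

lemma maxT: "G \<in> \<Gamma> \<Longrightarrow> m \<in> maxs G \<Longrightarrow> m \<in> nodes T \<and> tlt T (zero G) m"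
  using graft unfolding is_graft_def by blast

lemma impl_T: "G \<in> \<Gamma> \<Longrightarrow> x \<in> impl G \<Longrightarrow> x \<notin> nodes T"
  using graft unfolding is_graft_def by blast

lemma impl_nodes: "x \<in> impl G \<Longrightarrow> x \<in> nodes G \<and> x \<noteq> zero G \<and> x \<notin> maxs G"
  unfolding impl_def by blast

lemma max_nodes: "m \<in> maxs G \<Longrightarrow> m \<in> nodes G \<and> \<not> (\<exists>y. tlt G m y)"
  unfolding maxs_def by blast

lemma nodesG: "G \<in> \<Gamma> \<Longrightarrow> x \<in> nodes G \<Longrightarrow> x = zero G \<or> x \<in> maxs G \<or> x \<in> impl G"
  unfolding impl_def by blast

lemma zero_lt: assumes "G \<in> \<Gamma>" "x \<in> nodes G" "x \<noteq> zero G" shows "tlt G (zero G) x"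
  using Gzero(2)[OF assms(1,2)] assms(3) unfolding tle_def by auto

lemma zero_not_max: assumes "G \<in> \<Gamma>" shows "zero G \<notin> maxs G"
proof
  assume zm: "zero G \<in> maxs G"
  obtain a b where ab: "a \<in> nodes G" "b \<in> nodes G" "a \<noteq> b" using graft[OF assms] unfolding is_graft_def by blast
  then have "a \<noteq> zero G \<or> b \<noteq> zero G" by blast
  then obtain c where "c \<in> nodes G" "c \<noteq> zero G" using ab by blast
  then have "tlt G (zero G) c" using zero_lt[OF assms] by blast
  then show False using max_nodes[OF zm] by blast
qed

lemma impl_gt: assumes "G \<in> \<Gamma>" "x \<in> impl G" shows "tlt G (zero G) x"
  using zero_lt[OF assms(1)] impl_nodes[OF assms(2)] by blast

lemma max_gt: assumes "G \<in> \<Gamma>" "m \<in> maxs G" shows "tlt G (zero G) m"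
proof -
  have "m \<noteq> zero G" using zero_not_max[OF assms(1)] assms(2) by blast
  then show ?thesis using zero_lt[OF assms(1)] max_nodes[OF assms(2)] by blast
qed

lemma antichain: assumes "G \<in> \<Gamma>" "m1 \<in> maxs G" "m2 \<in> maxs G" "tle T m1 v" "tle T m2 v"
  shows "m1 = m2"
proof (rule ccontr)
  assume ne: "m1 \<noteq> m2"
  have "is_antichain T (maxs G)" using graft[OF assms(1)] unfolding is_graft_def by blast
  then have "incomp T m1 m2" using assms(2,3) ne unfolding is_antichain_def by blast
  then show False using tree_lin_le[OF T assms(4,5)] unfolding incomp_def by blast
qed

lemma troot_eq: assumes "G \<in> \<Gamma>" "m \<in> maxs G" "tle T m v" shows "troot T v (maxs G) = m"
  unfolding troot_def
proof (rule the_equality)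
  show "m \<in> maxs G \<and> tle T m v" using assms by blast
  fix r assume "r \<in> maxs G \<and> tle T r v"
  then show "r = m" using antichain[OF assms(1)] assms by blast
qed

lemma down_iff: "v \<in> down T A \<longleftrightarrow> (\<exists>m\<in>A. tle T m v)"
  unfolding down_def by blast

lemma expl_iff: "v \<in> expl T G \<longleftrightarrow> tlt T (zero G) v \<and> \<not> (\<exists>m\<in>maxs G. tle T m v)"
  unfolding expl_def down_def by blast

lemma supp_iff: "v \<in> S \<longleftrightarrow> v \<in> nodes T \<and> (\<forall>G\<in>\<Gamma>. tlt T (zero G) v \<longrightarrow> (\<exists>m\<in>maxs G. tle T m v))"
  by (auto simp: supp_def expl_iff)

lemma supp_T: "v \<in> S \<Longrightarrow> v \<in> nodes T"
  using supp_iff by blast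

lemma supp_above: "v \<in> S \<Longrightarrow> G \<in> \<Gamma> \<Longrightarrow> tlt T (zero G) v \<Longrightarrow> \<exists>m\<in>maxs G. tle T m v"
  using supp_iff by blast

lemma cons2: assumes "D \<in> \<Gamma>" "E \<in> \<Gamma>" "D \<noteq> E"
  shows "impl D \<inter> impl E = {}"
    and "incomp T (zero D) (zero E) \<or> (\<exists>m\<in>maxs E. tle T m (zero D)) \<or> (\<exists>m\<in>maxs D. tle T m (zero E))"
proof -
  have "\<forall>D\<in>\<Gamma>. \<forall>E\<in>\<Gamma>. D \<noteq> E \<longrightarrow>
        impl D \<inter> impl E = {} \<and>
        (incomp T (zero D) (zero E) \<or> zero D \<in> down T (maxs E) \<or> zero E \<in> down T (maxs D))"
    using cons unfolding consistent_grafts_def by simp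
  then have "impl D \<inter> impl E = {} \<and>
        (incomp T (zero D) (zero E) \<or> zero D \<in> down T (maxs E) \<or> zero E \<in> down T (maxs D))"
    using assms by simp
  then show "impl D \<inter> impl E = {}"
    and "incomp T (zero D) (zero E) \<or> (\<exists>m\<in>maxs E. tle T m (zero D)) \<or> (\<exists>m\<in>maxs D. tle T m (zero E))"
    unfolding down_iff by simp_all
qed

lemma impl_unique: "D \<in> \<Gamma> \<Longrightarrow> E \<in> \<Gamma> \<Longrightarrow> x \<in> impl D \<Longrightarrow> x \<in> impl E \<Longrightarrow> D = E"
  using cons2(1) by blast

lemma impl_S: "G \<in> \<Gamma> \<Longrightarrow> x \<in> impl G \<Longrightarrow> x \<notin> S"
  using impl_T supp_T by blast

lemma zero_distinct: assumes "D \<in> \<Gamma>" "E \<in> \<Gamma>" "zero D = zero E" shows "D = E"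
proof (rule ccontr)
  assume ne: "D \<noteq> E"
  have "tle T (zero D) (zero E)" using assms(3) unfolding tle_def by simp
  then have ni: "\<not> incomp T (zero D) (zero E)" unfolding incomp_def by blast
  show False
  proof (cases "\<exists>m\<in>maxs E. tle T m (zero D)")
    case True
    then obtain m where m: "m \<in> maxs E" "tle T m (zero D)" by blast
    have "tlt T (zero E) m" using maxT[OF assms(2) m(1)] by blast
    then show False using m(2) assms(3) tree_asym[OF T] tree_irrefl[OF T] unfolding tle_def by metis
  next
    case False
    then obtain m where m: "m \<in> maxs D" "tle T m (zero E)" using cons2(2)[OF assms(1,2) ne] ni by blast
    have "tlt T (zero D) m" using maxT[OF assms(1) m(1)] by blast
    then show False using m(2) assms(3) tree_asym[OF T] tree_irrefl[OF T] unfolding tle_def by metis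
  qed
qed

lemma zero_S: assumes "E \<in> \<Gamma>" shows "zero E \<in> S"
  unfolding supp_iff
proof (intro conjI ballI impI)
  show "zero E \<in> nodes T" using zeroT[OF assms] .
  fix D assume D: "D \<in> \<Gamma>" and lt: "tlt T (zero D) (zero E)"
  have ne: "D \<noteq> E" using lt tree_irrefl[OF T] by blast
  have ni: "\<not> incomp T (zero D) (zero E)" using lt unfolding incomp_def tle_def by blast
  show "\<exists>m\<in>maxs D. tle T m (zero E)"
  proof (rule ccontr)
    assume nm: "\<not> (\<exists>m\<in>maxs D. tle T m (zero E))"
    then obtain m where m: "m \<in> maxs E" "tle T m (zero D)" using cons2(2)[OF D assms ne] ni by blast
    have "tlt T (zero E) m" using maxT[OF assms m(1)] by blast
    then have "tlt T (zero E) (zero D)" using m(2) tree_trans[OF T] unfolding tle_def by blast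
    then show False using lt tree_asym[OF T] by blast
  qed
qed

lemma max_S: assumes "G \<in> \<Gamma>" "m \<in> maxs G" shows "m \<in> S"
  unfolding supp_iff
proof (intro conjI ballI impI)
  show "m \<in> nodes T" using maxT[OF assms] by blast
  fix E assume E: "E \<in> \<Gamma>" and lt: "tlt T (zero E) m"
  have zm: "tlt T (zero G) m" using maxT[OF assms] by blast
  show "\<exists>m'\<in>maxs E. tle T m' m"
  proof (cases "E = G")
    case True then show ?thesis using assms(2) unfolding tle_def by blast
  next
    case ne: False
    have ni: "\<not> incomp T (zero E) (zero G)"
      using tree_lin[OF T lt zm] unfolding incomp_def tle_def by blast
    consider "\<exists>m'\<in>maxs G. tle T m' (zero E)" | "\<exists>m'\<in>maxs E. tle T m' (zero G)"
      using cons2(2)[OF E assms(1) ne] ni by blast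
    then show ?thesis
    proof cases
      case 1
      then obtain m' where m': "m' \<in> maxs G" "tle T m' (zero E)" by blast
      then have "tle T m' m" using lt tree_trans[OF T] unfolding tle_def by blast
      then have "m' = m" using antichain[OF assms(1) m'(1) assms(2)] unfolding tle_def by blast
      then have "tlt T m m" using m'(2) lt tree_trans[OF T] unfolding tle_def by blast
      then show ?thesis using tree_irrefl[OF T] by blast
    next
      case 2
      then obtain m' where m': "m' \<in> maxs E" "tle T m' (zero G)" by blast
      then have "tle T m' m" using zm tree_trans[OF T] unfolding tle_def by blast
      then show ?thesis using m' by blast
    qed
  qed
qed

section \<open>Characterisation of the hybrid order\<close>

lemma H_nodes: "nodes H = S \<union> (\<Union>G\<in>\<Gamma>. impl G)"
  unfolding hybr_def nodes_def by simp

lemma H_lt: "tlt H x y \<longleftrightarrow>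
       (x \<in> S \<and> y \<in> S \<and> tlt T x y) \<or>
       (\<exists>G\<in>\<Gamma>. x \<in> impl G \<and> y \<in> impl G \<and> tlt G x y) \<or>
       (\<exists>G\<in>\<Gamma>. x \<in> S \<and> y \<in> impl G \<and> tle T x (zero G)) \<or>
       (\<exists>G\<in>\<Gamma>. x \<in> impl G \<and> y \<in> S \<and> y \<in> down T (maxs G) \<and>
                tlt G x (troot T y (maxs G))) \<or>
       (\<exists>D\<in>\<Gamma>. \<exists>E\<in>\<Gamma>. D \<noteq> E \<and> x \<in> impl D \<and> y \<in> impl E \<and>
                zero E \<in> down T (maxs D) \<and> tlt D x (troot T (zero E) (maxs D)))"
  unfolding hybr_def tlt_def by simp

lemma CS: assumes y: "y \<in> S"
  shows "tlt H x y \<longleftrightarrow> (x \<in> S \<and> tlt T x y) \<or>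
    (\<exists>G\<in>\<Gamma>. x \<in> impl G \<and> (\<exists>m\<in>maxs G. tle T m y \<and> tlt G x m))"
proof
  assume "tlt H x y"
  then show "(x \<in> S \<and> tlt T x y) \<or> (\<exists>G\<in>\<Gamma>. x \<in> impl G \<and> (\<exists>m\<in>maxs G. tle T m y \<and> tlt G x m))"
    unfolding H_lt
    apply (elim disjE bexE conjE)
    subgoal by (rule disjI1) (rule conjI)
    subgoal for G using impl_S[of G y] y by simp
    subgoal for G using impl_S[of G y] y by simp
    subgoal for G
    proof -
      assume G: "G \<in> \<Gamma>" "x \<in> impl G" "y \<in> down T (maxs G)" "tlt G x (troot T y (maxs G))"
      obtain m where m: "m \<in> maxs G" "tle T m y" using G(3) unfolding down_iff by blast
      have "tlt G x m" using troot_eq[OF G(1) m] G(4) by simp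
      then show ?thesis using G(1,2) m by blast
    qed
    subgoal for D E using impl_S[of E y] y by simp
    done
next
  assume "(x \<in> S \<and> tlt T x y) \<or> (\<exists>G\<in>\<Gamma>. x \<in> impl G \<and> (\<exists>m\<in>maxs G. tle T m y \<and> tlt G x m))"
  then show "tlt H x y"
  proof
    assume "x \<in> S \<and> tlt T x y" then show ?thesis unfolding H_lt using y by simp
  next
    assume "\<exists>G\<in>\<Gamma>. x \<in> impl G \<and> (\<exists>m\<in>maxs G. tle T m y \<and> tlt G x m)"
    then obtain G m where G: "G \<in> \<Gamma>" "x \<in> impl G" "m \<in> maxs G" "tle T m y" "tlt G x m" by blast
    have "y \<in> down T (maxs G)" using G unfolding down_iff by blast
    moreover have "tlt G x (troot T y (maxs G))" using troot_eq[OF G(1,3,4)] G(5) by simp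
    ultimately have "\<exists>G\<in>\<Gamma>. x \<in> impl G \<and> y \<in> S \<and> y \<in> down T (maxs G) \<and>
                tlt G x (troot T y (maxs G))" using G(1,2) y by blast
    then show ?thesis unfolding H_lt by blast
  qed
qed

lemma CS_S: "y \<in> S \<Longrightarrow> x \<in> S \<Longrightarrow> tlt H x y \<longleftrightarrow> tlt T x y"
  using CS impl_S by blast

lemma CS_I: "y \<in> S \<Longrightarrow> G \<in> \<Gamma> \<Longrightarrow> x \<in> impl G \<Longrightarrow> tlt H x y \<longleftrightarrow> (\<exists>m\<in>maxs G. tle T m y \<and> tlt G x m)"
  using CS impl_S impl_unique by blast

lemma CI: assumes E: "E \<in> \<Gamma>" and y: "y \<in> impl E"
  shows "tlt H x y \<longleftrightarrow> tle H x (zero E) \<or> (x \<in> impl E \<and> tlt E x y)"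
proof
  assume "tlt H x y"
  then show "tle H x (zero E) \<or> (x \<in> impl E \<and> tlt E x y)"
    unfolding H_lt
    apply (elim disjE bexE conjE)
    subgoal using impl_S[OF E y] by simp
    subgoal for G using impl_unique[OF _ E _ y, of G] by simp
    subgoal for G
    proof -
      assume G: "G \<in> \<Gamma>" "x \<in> S" "y \<in> impl G" "tle T x (zero G)"
      then have GE: "G = E" using impl_unique E y by blast
      show ?thesis
      proof (cases "x = zero E")
        case True then show ?thesis unfolding tle_def by blast
      next
        case False
        then have "tlt T x (zero E)" using G(4) GE unfolding tle_def by blast
        then have "tlt H x (zero E)" using CS_S[OF zero_S[OF E] G(2)] by blast
        then show ?thesis unfolding tle_def by blast
      qed
    qed
    subgoal for G using impl_S[OF E y] by simp
    subgoal for D E'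
    proof -
      assume DE: "D \<in> \<Gamma>" "E' \<in> \<Gamma>" "D \<noteq> E'" "x \<in> impl D" "y \<in> impl E'"
        "zero E' \<in> down T (maxs D)" "tlt D x (troot T (zero E') (maxs D))"
      then have EE: "E' = E" using impl_unique E y by blast
      obtain m where m: "m \<in> maxs D" "tle T m (zero E)" using DE(6) EE unfolding down_iff by blast
      have "tlt D x m" using DE(7) troot_eq[OF DE(1) m] EE by simp
      then have "tlt H x (zero E)" using CS_I[OF zero_S[OF E] DE(1,4)] m by blast
      then show ?thesis unfolding tle_def by blast
    qed
    done
next
  assume "tle H x (zero E) \<or> (x \<in> impl E \<and> tlt E x y)"
  then consider "x = zero E" | "tlt H x (zero E)" | "x \<in> impl E \<and> tlt E x y" unfolding tle_def by blast
  then show "tlt H x y"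
  proof cases
    case 1
    have "\<exists>G\<in>\<Gamma>. x \<in> S \<and> y \<in> impl G \<and> tle T x (zero G)"
      using 1 zero_S[OF E] E y unfolding tle_def by blast
    then show ?thesis unfolding H_lt by blast
  next
    case 2
    then consider "x \<in> S \<and> tlt T x (zero E)" | "\<exists>G\<in>\<Gamma>. x \<in> impl G \<and> (\<exists>m\<in>maxs G. tle T m (zero E) \<and> tlt G x m)"
      using CS[OF zero_S[OF E]] by blast
    then show ?thesis
    proof cases
      case 1
      have "\<exists>G\<in>\<Gamma>. x \<in> S \<and> y \<in> impl G \<and> tle T x (zero G)"
        using 1 E y unfolding tle_def by blast
      then show ?thesis unfolding H_lt by blast
    next
      case 2
      then obtain D m where D: "D \<in> \<Gamma>" "x \<in> impl D" "m \<in> maxs D" "tle T m (zero E)" "tlt D x m" by blast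
      have DE: "D \<noteq> E"
      proof
        assume "D = E"
        then have "tlt T (zero E) m" using maxT D by blast
        then show False using D(4) tree_asym[OF T] tree_irrefl[OF T] unfolding tle_def by blast
      qed
      have "zero E \<in> down T (maxs D)" using D unfolding down_iff by blast
      moreover have "tlt D x (troot T (zero E) (maxs D))" using troot_eq[OF D(1,3,4)] D(5) by simp
      ultimately have "\<exists>D\<in>\<Gamma>. \<exists>E\<in>\<Gamma>. D \<noteq> E \<and> x \<in> impl D \<and> y \<in> impl E \<and>
                zero E \<in> down T (maxs D) \<and> tlt D x (troot T (zero E) (maxs D))"
        using D(1,2) DE E y by blast
      then show ?thesis unfolding H_lt by blast
    qed
  next
    case 3
    then have "\<exists>G\<in>\<Gamma>. x \<in> impl G \<and> y \<in> impl G \<and> tlt G x y" using E y by blast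
    then show ?thesis unfolding H_lt by blast
  qed
qed

end

context hyb
begin

lemma H_field: assumes "tlt H x y" shows "x \<in> nodes H" "y \<in> nodes H"
  using assms unfolding H_lt H_nodes
  by (elim disjE bexE conjE; force simp: down_iff)+

lemma NZ: assumes E: "E \<in> \<Gamma>" and x: "x \<in> impl E" shows "\<not> tlt H x (zero E)"
proof
  assume "tlt H x (zero E)"
  then obtain m where m: "m \<in> maxs E" "tle T m (zero E)" "tlt E x m"
    using CS_I[OF zero_S[OF E] E x] by blast
  have "tlt T (zero E) m" using maxT[OF E m(1)] by blast
  then show False using m(2) tree_asym[OF T] tree_irrefl[OF T] unfolding tle_def by blast
qed

lemma H_cases: "x \<in> nodes H \<Longrightarrow> (x \<in> S \<Longrightarrow> P) \<Longrightarrow> (\<And>E. E \<in> \<Gamma> \<Longrightarrow> x \<in> impl E \<Longrightarrow> P) \<Longrightarrow> P"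
  unfolding H_nodes by blast

lemma H_irrefl: "\<not> tlt H x x"
proof
  assume h: "tlt H x x"
  then have "x \<in> nodes H" using H_field by blast
  then show False
  proof (rule H_cases)
    assume "x \<in> S" then show False using h CS_S tree_irrefl[OF T] by blast
  next
    fix E assume E: "E \<in> \<Gamma>" "x \<in> impl E"
    have "tle H x (zero E) \<or> (x \<in> impl E \<and> tlt E x x)" using h CI[OF E] by blast
    moreover have "x \<noteq> zero E" using impl_S[OF E] zero_S[OF E(1)] by blast
    ultimately show False using NZ[OF E] tree_irrefl[OF Gtree[OF E(1)]] unfolding tle_def by blast
  qed
qed

lemma trans_S: assumes z: "z \<in> S" and xy: "tlt H x y" and yz: "tlt H y z" shows "tlt H x z"
proof -
  consider "y \<in> S" "tlt T y z" | G m where "G \<in> \<Gamma>" "y \<in> impl G" "m \<in> maxs G" "tle T m z" "tlt G y m"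
    using CS[OF z] yz by blast
  then show ?thesis
  proof cases
    case 1
    note Y = 1
    consider "x \<in> S" "tlt T x y" | G' m' where "G' \<in> \<Gamma>" "x \<in> impl G'" "m' \<in> maxs G'" "tle T m' y" "tlt G' x m'"
      using CS[OF 1(1)] xy by blast
    then show ?thesis
    proof cases
      case 1
      then show ?thesis using CS_S[OF z] Y tree_trans[OF T] by blast
    next
      case 2
      then have "tle T m' z" using Y tree_trans[OF T] unfolding tle_def by blast
      then show ?thesis using CS_I[OF z 2(1,2)] 2 by blast
    qed
  next
    case 2
    note G = 2
    have zS: "zero G \<in> S" using zero_S[OF G(1)] .
    have zm: "tlt T (zero G) z"
      using maxT[OF G(1,3)] G(4) tree_trans[OF T] unfolding tle_def by blast
    consider "x = zero G" | "tlt H x (zero G)" | "x \<in> impl G" "tlt G x y"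
      using CI[OF G(1,2)] xy unfolding tle_def by blast
    then show ?thesis
    proof cases
      case 1 then show ?thesis using CS_S[OF z zS] zm by blast
    next
      case 2
      consider "x \<in> S" "tlt T x (zero G)" | D m' where "D \<in> \<Gamma>" "x \<in> impl D" "m' \<in> maxs D" "tle T m' (zero G)" "tlt D x m'"
        using CS[OF zS] 2 by blast
      then show ?thesis
      proof cases
        case 1 then show ?thesis using CS_S[OF z] zm tree_trans[OF T] by blast
      next
        case 2
        then have "tle T m' z" using zm tree_trans[OF T] unfolding tle_def by blast
        then show ?thesis using CS_I[OF z 2(1,2)] 2 by blast
      qed
    next
      case 3
      then have "tlt G x m" using G(5) tree_trans[OF Gtree[OF G(1)]] by blast
      then show ?thesis using CS_I[OF z G(1) 3(1)] G by blast
    qed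
  qed
qed

lemma H_trans: assumes xy: "tlt H x y" and yz: "tlt H y z" shows "tlt H x z"
proof -
  have "z \<in> nodes H" using H_field yz by blast
  then show ?thesis
  proof (rule H_cases)
    assume "z \<in> S" then show ?thesis using trans_S xy yz by blast
  next
    fix E assume E: "E \<in> \<Gamma>" "z \<in> impl E"
    have zS: "zero E \<in> S" using zero_S[OF E(1)] .
    consider "y = zero E" | "tlt H y (zero E)" | "y \<in> impl E" "tlt E y z"
      using CI[OF E] yz unfolding tle_def by blast
    then show ?thesis
    proof cases
      case 1 then show ?thesis using CI[OF E] xy unfolding tle_def by blast
    next
      case 2 then have "tlt H x (zero E)" using trans_S[OF zS xy] by blast
      then show ?thesis using CI[OF E] unfolding tle_def by blast
    next
      case 3
      consider "tle H x (zero E)" | "x \<in> impl E" "tlt E x y" using CI[OF E(1) 3(1)] xy by blast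
      then show ?thesis
      proof cases
        case 1 then show ?thesis using CI[OF E] by blast
      next
        case 2 then show ?thesis using CI[OF E] 3 tree_trans[OF Gtree[OF E(1)]] by blast
      qed
    qed
  qed
qed

lemma H_asym: "tlt H x y \<Longrightarrow> \<not> tlt H y x"
  using H_trans H_irrefl by blast

lemma lin_S: assumes y: "y \<in> S" and a: "tlt H a y" and b: "tlt H b y"
  shows "a = b \<or> tlt H a b \<or> tlt H b a"
proof -
  have yT: "y \<in> nodes T" using supp_T[OF y] .
  have mixed: "tlt H a b \<or> tlt H b a"
    if aS: "a \<in> S" "tlt T a y" and bG: "G \<in> \<Gamma>" "b \<in> impl G" "m \<in> maxs G" "tle T m y" "tlt G b m"
    for a b G m
  proof -
    have zy: "tlt T (zero G) y" using maxT[OF bG(1,3)] bG(4) tree_trans[OF T] unfolding tle_def by blast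
    have zS: "zero G \<in> S" using zero_S[OF bG(1)] .
    consider "a = zero G" | "tlt T a (zero G)" | "tlt T (zero G) a" using tree_lin[OF T aS(2) zy] by blast
    then show ?thesis
    proof cases
      case 1 then show ?thesis using CI[OF bG(1,2)] unfolding tle_def by blast
    next
      case 2 then have "tlt H a (zero G)" using CS_S[OF zS aS(1)] by blast
      then show ?thesis using CI[OF bG(1,2)] unfolding tle_def by blast
    next
      case 3
      then obtain m' where m': "m' \<in> maxs G" "tle T m' a" using supp_above[OF aS(1) bG(1)] by blast
      have "tle T m' y" using m'(2) aS(2) tree_trans[OF T] unfolding tle_def by blast
      then have "m' = m" using antichain[OF bG(1) m'(1) bG(3) _ bG(4)] by blast
      then have "tlt H b a" using CS_I[OF aS(1) bG(1,2)] m' bG(5) by blast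
      then show ?thesis by blast
    qed
  qed
  consider "a \<in> S" "tlt T a y" | G m where "G \<in> \<Gamma>" "a \<in> impl G" "m \<in> maxs G" "tle T m y" "tlt G a m"
    using CS[OF y] a by blast
  then show ?thesis
  proof cases
    case 1
    note A = 1
    consider "b \<in> S" "tlt T b y" | G m where "G \<in> \<Gamma>" "b \<in> impl G" "m \<in> maxs G" "tle T m y" "tlt G b m"
      using CS[OF y] b by blast
    then show ?thesis
    proof cases
      case 1
      have "tlt T a b \<Longrightarrow> tlt H a b" using CS_S[OF 1(1) A(1)] by simp
      moreover have "tlt T b a \<Longrightarrow> tlt H b a" using CS_S[OF A(1) 1(1)] by simp
      ultimately show ?thesis using tree_lin[OF T A(2) 1(2)] by blast
    next
      case 2 then show ?thesis using mixed[OF A 2] by blast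
    qed
  next
    case 2
    note A = 2
    consider "b \<in> S" "tlt T b y" | G' m' where "G' \<in> \<Gamma>" "b \<in> impl G'" "m' \<in> maxs G'" "tle T m' y" "tlt G' b m'"
      using CS[OF y] b by blast
    then show ?thesis
    proof cases
      case 1 then show ?thesis using mixed[OF 1 A] by blast
    next
      case 2
      note B = 2
      show ?thesis
      proof (cases "G' = G")
        case True
        then have "m' = m" using antichain[OF A(1) _ A(3) _ A(4)] B by blast
        then have "a = b \<or> tlt G a b \<or> tlt G b a" using tree_lin[OF Gtree[OF A(1)] A(5)] B True by blast
        moreover have "tlt G a b \<Longrightarrow> tlt H a b" using CI[OF A(1), of b a] B(2) True A(2) by simp
        moreover have "tlt G b a \<Longrightarrow> tlt H b a" using CI[OF A(1,2), of b] B(2) True by simp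
        ultimately show ?thesis by blast
      next
        case ne: False
        have za: "tlt T (zero G) y" using maxT[OF A(1,3)] A(4) tree_trans[OF T] unfolding tle_def by blast
        have zb: "tlt T (zero G') y" using maxT[OF B(1,3)] B(4) tree_trans[OF T] unfolding tle_def by blast
        have ni: "\<not> incomp T (zero G) (zero G')" using tree_lin[OF T za zb] unfolding incomp_def tle_def by blast
        consider "\<exists>k\<in>maxs G'. tle T k (zero G)" | "\<exists>k\<in>maxs G. tle T k (zero G')"
          using cons2(2)[OF A(1) B(1) ne[symmetric]] ni by blast
        then show ?thesis
        proof cases
          case 1
          then obtain k where k: "k \<in> maxs G'" "tle T k (zero G)" by blast
          have "tle T k y" using k(2) za tree_trans[OF T] unfolding tle_def by blast
          then have "k = m'" using antichain[OF B(1) k(1) B(3) _ B(4)] by blast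
          then have "tlt H b (zero G)" using CS_I[OF zero_S[OF A(1)] B(1,2)] k B(5) by blast
          then show ?thesis using CI[OF A(1,2)] unfolding tle_def by blast
        next
          case 2
          then obtain k where k: "k \<in> maxs G" "tle T k (zero G')" by blast
          have "tle T k y" using k(2) zb tree_trans[OF T] unfolding tle_def by blast
          then have "k = m" using antichain[OF A(1) k(1) A(3) _ A(4)] by blast
          then have "tlt H a (zero G')" using CS_I[OF zero_S[OF B(1)] A(1,2)] k A(5) by blast
          then show ?thesis using CI[OF B(1,2)] unfolding tle_def by blast
        qed
      qed
    qed
  qed
qed

lemma lin_H: assumes a: "tlt H a y" and b: "tlt H b y"
  shows "a = b \<or> tlt H a b \<or> tlt H b a"
proof -
  have "y \<in> nodes H" using H_field a by blast
  then show ?thesis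
  proof (rule H_cases)
    assume "y \<in> S" then show ?thesis using lin_S a b by blast
  next
    fix E assume E: "E \<in> \<Gamma>" "y \<in> impl E"
    have zS: "zero E \<in> S" using zero_S[OF E(1)] .
    consider "a = zero E" | "tlt H a (zero E)" | "a \<in> impl E" "tlt E a y"
      using CI[OF E] a unfolding tle_def by blast
    then show ?thesis
    proof cases
      case 1
      consider "b = zero E" | "tlt H b (zero E)" | "b \<in> impl E" "tlt E b y"
        using CI[OF E] b unfolding tle_def by blast
      then show ?thesis
      proof cases
        case 3 then show ?thesis using 1 CI[OF E(1) 3(1), of a] unfolding tle_def by blast
      qed (use 1 in blast)+
    next
      case 2
      note A = 2
      consider "b = zero E" | "tlt H b (zero E)" | "b \<in> impl E" "tlt E b y"
        using CI[OF E] b unfolding tle_def by blast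
      then show ?thesis
      proof cases
        case 1 then show ?thesis using A by blast
      next
        case 2 then show ?thesis using lin_S[OF zS A 2] by blast
      next
        case 3 then show ?thesis using A CI[OF E(1) 3(1), of a] unfolding tle_def by blast
      qed
    next
      case 3
      note A = 3
      consider "b = zero E" | "tlt H b (zero E)" | "b \<in> impl E" "tlt E b y"
        using CI[OF E] b unfolding tle_def by blast
      then show ?thesis
      proof cases
        case 1 then show ?thesis using A CI[OF E(1) A(1), of b] unfolding tle_def by blast
      next
        case 2 then show ?thesis using A CI[OF E(1) A(1), of b] unfolding tle_def by blast
      next
        case 3
        have "a = b \<or> tlt E a b \<or> tlt E b a" using tree_lin[OF Gtree[OF E(1)] A(2) 3(2)] .
        moreover have "tlt E a b \<Longrightarrow> tlt H a b" using CI[OF E(1) 3(1), of a] A by simp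
        moreover have "tlt E b a \<Longrightarrow> tlt H b a" using CI[OF E(1) A(1), of b] 3 by simp
        ultimately show ?thesis by blast
      qed
    qed
  qed
qed

end

context hyb
begin

lemma fin_S: assumes y: "y \<in> S" shows "finite (preds H y)"
proof -
  have yT: "y \<in> nodes T" using supp_T[OF y] .
  define Gy where "Gy = {G \<in> \<Gamma>. tlt T (zero G) y}"
  have "inj_on zero Gy" unfolding Gy_def inj_on_def using zero_distinct by blast
  moreover have "zero ` Gy \<subseteq> preds T y" unfolding Gy_def preds_def by blast
  moreover have "finite (zero ` Gy)" using finite_subset[OF _ fin_preds[OF yT]] calculation(2) .
  ultimately have finGy: "finite Gy" using finite_imageD by blast
  define M where "M G = {m \<in> maxs G. tle T m y}" for G
  have finM: "finite (M G)" for G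
  proof (rule finite_subset[of _ "insert y (preds T y)"])
    show "M G \<subseteq> insert y (preds T y)" by (auto simp: M_def preds_def tle_def)
  qed (simp add: fin_preds[OF yT])
  have sub: "preds H y \<subseteq> preds T y \<union> (\<Union>G\<in>Gy. \<Union>m\<in>M G. preds G m)"
  proof
    fix x assume "x \<in> preds H y"
    then have "tlt H x y" unfolding preds_def by simp
    then consider "x \<in> S" "tlt T x y" | G m where "G \<in> \<Gamma>" "x \<in> impl G" "m \<in> maxs G" "tle T m y" "tlt G x m"
      using CS[OF y] by blast
    then show "x \<in> preds T y \<union> (\<Union>G\<in>Gy. \<Union>m\<in>M G. preds G m)"
    proof cases
      case 1 then show ?thesis unfolding preds_def by simp
    next
      case 2
      have "tlt T (zero G) y" using maxT[OF 2(1,3)] 2(4) tree_trans[OF T] unfolding tle_def by blast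
      then have "G \<in> Gy" "m \<in> M G" using 2 unfolding Gy_def M_def by auto
      moreover have "x \<in> preds G m" using 2(5) unfolding preds_def by simp
      ultimately show ?thesis by blast
    qed
  qed
  have "finite (\<Union>G\<in>Gy. \<Union>m\<in>M G. preds G m)"
  proof (intro finite_UN_I finGy finM)
    fix G m assume "G \<in> Gy" "m \<in> M G"
    then have "G \<in> \<Gamma>" "m \<in> nodes G" using max_nodes[of m G] unfolding Gy_def M_def by auto
    then show "finite (preds G m)" using Gfin by blast
  qed
  then show ?thesis using finite_subset[OF sub] fin_preds[OF yT] by blast
qed

lemma fin_H: assumes y: "y \<in> nodes H" shows "finite (preds H y)"
  using y
proof (rule H_cases)
  assume "y \<in> S" then show ?thesis using fin_S by blast
next
  fix E assume E: "E \<in> \<Gamma>" "y \<in> impl E"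
  have "preds H y \<subseteq> insert (zero E) (preds H (zero E)) \<union> preds E y"
  proof
    fix x assume "x \<in> preds H y"
    then have "tlt H x y" unfolding preds_def by simp
    then have "tle H x (zero E) \<or> (x \<in> impl E \<and> tlt E x y)" using CI[OF E, of x] by simp
    then show "x \<in> insert (zero E) (preds H (zero E)) \<union> preds E y" unfolding preds_def tle_def by blast
  qed
  moreover have "finite (preds E y)" using Gfin[OF E(1)] impl_nodes[OF E(2)] by blast
  ultimately show ?thesis using fin_S[OF zero_S[OF E(1)]] finite_subset by blast
qed

lemma H_tree: "is_tree H"
  unfolding is_tree_def
proof (intro conjI allI impI ballI)
  show "x \<in> nodes H" "y \<in> nodes H" if "tlt H x y" for x y using H_field that by blast+
  show "\<not> tlt H x x" for x by (rule H_irrefl)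
  show "tlt H x z" if "tlt H x y" "tlt H y z" for x y z using H_trans that by blast
  show "y = z \<or> tlt H y z \<or> tlt H z y" if "y \<in> preds H x" "z \<in> preds H x" for x y z
    using lin_H that unfolding preds_def by blast
  fix x S' assume x: "x \<in> nodes H" and S': "S' \<subseteq> preds H x" "S' \<noteq> {}"
  show "\<exists>m\<in>S'. \<forall>s\<in>S'. \<not> tlt H s m"
  proof (rule finite_rel_min)
    show "finite S'" using finite_subset[OF S'(1) fin_H[OF x]] .
    show "S' \<noteq> {}" by (rule S'(2))
    show "\<not> tlt H y y" for y by (rule H_irrefl)
    show "tlt H y z \<Longrightarrow> tlt H z w \<Longrightarrow> tlt H y w" for y z w by (rule H_trans)
  qed
qed

lemma root_S: "g [] \<in> S"
  unfolding supp_iff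
proof (intro conjI ballI impI)
  show "g [] \<in> nodes T" using root(1) .
  fix G assume G: "G \<in> \<Gamma>" "tlt T (zero G) (g [])"
  have "tle T (g []) (zero G)" using root(2) zeroT[OF G(1)] by blast
  then consider "g [] = zero G" | "tlt T (g []) (zero G)" unfolding tle_def by blast
  then have False
  proof cases
    case 1 then show False using G(2) tree_irrefl[OF T] by simp
  next
    case 2 then show False using G(2) tree_asym[OF T] by blast
  qed
  then show "\<exists>m\<in>maxs G. tle T m (g [])" by blast
qed

lemma root_H: assumes y: "y \<in> nodes H" shows "tle H (g []) y"
  using y
proof (rule H_cases)
  assume yS: "y \<in> S"
  then have "tle T (g []) y" using root(2) supp_T by blast
  then show ?thesis using CS_S[OF yS root_S] unfolding tle_def by blast
next
  fix E assume E: "E \<in> \<Gamma>" "y \<in> impl E"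
  have "tle T (g []) (zero E)" using root(2) zeroT[OF E(1)] by blast
  then have "tle H (g []) (zero E)" using CS_S[OF zero_S[OF E(1)] root_S] unfolding tle_def by blast
  then show ?thesis using CI[OF E] unfolding tle_def by blast
qed

lemma zero_H: "zero H = g []"
  unfolding zero_def
proof (rule the_equality)
  have gH: "g [] \<in> nodes H" using root_S unfolding H_nodes by blast
  show "g [] \<in> nodes H \<and> (\<forall>y\<in>nodes H. tle H (g []) y)" using gH root_H by blast
  fix r assume r: "r \<in> nodes H \<and> (\<forall>y\<in>nodes H. tle H r y)"
  then have 1: "tle H r (g [])" using gH by blast
  have 2: "tle H (g []) r" using r root_H by blast
  show "r = g []"
  proof (rule ccontr)
    assume "r \<noteq> g []"
    then have "tlt H r (g [])" "tlt H (g []) r" using 1 2 unfolding tle_def by auto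
    then show False using H_asym by blast
  qed
qed

end

context hyb
begin

lemma sonsI: "y \<in> nodes K \<Longrightarrow> tlt K x y \<Longrightarrow> (\<And>w. tlt K x w \<Longrightarrow> tlt K w y \<Longrightarrow> False) \<Longrightarrow> y \<in> sons K x"
  unfolding sons_def by blast

lemma sonsD: "y \<in> sons K x \<Longrightarrow> y \<in> nodes K \<and> tlt K x y \<and> (\<forall>w. tlt K x w \<longrightarrow> \<not> tlt K w y)"
  unfolding sons_def by blast

lemma SS: assumes y: "y \<in> S" and nz: "\<forall>G\<in>\<Gamma>. y \<noteq> zero G"
  shows "sons H y = sons T y"
proof
  show "sons H y \<subseteq> sons T y"
  proof
    fix s assume s: "s \<in> sons H y"
    note sD = sonsD[OF s]
    have "s \<in> nodes H" using sD by blast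
    then show "s \<in> sons T y"
    proof (rule H_cases)
      assume sS: "s \<in> S"
      have ys: "tlt T y s" using CS_S[OF sS y] sD by blast
      show ?thesis
      proof (rule sonsI)
        show "s \<in> nodes T" using supp_T[OF sS] .
        show "tlt T y s" by (rule ys)
        fix w assume w1: "tlt T y w" and w2: "tlt T w s"
        show False
        proof (cases "w \<in> S")
          case True
          have "tlt H y w" using CS_S[OF True y] w1 by blast
          moreover have "tlt H w s" using CS_S[OF sS True] w2 by blast
          ultimately show False using sD by blast
        next
          case False
          have wT: "w \<in> nodes T" using tree_field[OF T w1] by blast
          then obtain G where G: "G \<in> \<Gamma>" "tlt T (zero G) w" "\<not> (\<exists>m\<in>maxs G. tle T m w)"
            using False supp_iff by blast
          have zs: "tlt T (zero G) s" using G(2) w2 tree_trans[OF T] by blast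
          obtain m where m: "m \<in> maxs G" "tle T m s" using supp_above[OF sS G(1) zs] by blast
          consider "zero G = y" | "tlt T (zero G) y" | "tlt T y (zero G)" using tree_lin[OF T G(2) w1] by blast
          then show False
          proof cases
            case 1 then show False using nz G(1) by metis
          next
            case 2
            obtain m' where m': "m' \<in> maxs G" "tle T m' y" using supp_above[OF y G(1) 2] by blast
            have "tle T m' w" using m'(2) w1 tree_trans[OF T] unfolding tle_def by blast
            then show False using G(3) m'(1) by blast
          next
            case 3
            have zS: "zero G \<in> S" using zero_S[OF G(1)] .
            have "tlt H y (zero G)" using CS_S[OF zS y] 3 by blast
            moreover have "tlt H (zero G) s" using CS_S[OF sS zS] zs by blast
            ultimately show False using sD by blast
          qed
        qed
      qed
    next
      fix E assume E: "E \<in> \<Gamma>" "s \<in> impl E"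
      have "tle H y (zero E) \<or> (y \<in> impl E \<and> tlt E y s)" using CI[OF E, of y] sD by blast
      moreover have "y \<notin> impl E" using impl_S[OF E(1)] y by blast
      moreover have "y \<noteq> zero E" using nz E(1) by blast
      ultimately have "tlt H y (zero E)" unfolding tle_def by blast
      moreover have "tlt H (zero E) s" using CI[OF E, of "zero E"] unfolding tle_def by blast
      ultimately show ?thesis using sD by blast
    qed
  qed
next
  show "sons T y \<subseteq> sons H y"
  proof
    fix s assume s: "s \<in> sons T y"
    note sD = sonsD[OF s]
    have sS: "s \<in> S"
      unfolding supp_iff
    proof (intro conjI ballI impI)
      show "s \<in> nodes T" using sD by blast
      fix G assume G: "G \<in> \<Gamma>" "tlt T (zero G) s"
      have ys: "tlt T y s" using sD by blast
      consider "zero G = y" | "tlt T (zero G) y" | "tlt T y (zero G)" using tree_lin[OF T G(2) ys] by blast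
      then show "\<exists>m\<in>maxs G. tle T m s"
      proof cases
        case 1 then show ?thesis using nz G(1) by metis
      next
        case 2
        obtain m where m: "m \<in> maxs G" "tle T m y" using supp_above[OF y G(1) 2] by blast
        then have "tle T m s" using ys tree_trans[OF T] unfolding tle_def by blast
        then show ?thesis using m(1) by blast
      next
        case 3 then show ?thesis using sD G(2) by blast
      qed
    qed
    show "s \<in> sons H y"
    proof (rule sonsI)
      show "s \<in> nodes H" using sS unfolding H_nodes by blast
      show "tlt H y s" using CS_S[OF sS y] sD by blast
      fix w assume w1: "tlt H y w" and w2: "tlt H w s"
      have "w \<in> nodes H" using H_field w1 by blast
      then show False
      proof (rule H_cases)
        assume wS: "w \<in> S"
        have "tlt T y w" "tlt T w s" using CS_S[OF wS y] CS_S[OF sS wS] w1 w2 by blast+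
        then show False using sD by blast
      next
        fix E assume E: "E \<in> \<Gamma>" "w \<in> impl E"
        have "tle H y (zero E) \<or> (y \<in> impl E \<and> tlt E y w)" using CI[OF E, of y] w1 by blast
        moreover have "y \<notin> impl E" using impl_S[OF E(1)] y by blast
        moreover have "y \<noteq> zero E" using nz E(1) by blast
        ultimately have "tlt H y (zero E)" unfolding tle_def by blast
        then have yz: "tlt T y (zero E)" using CS_S[OF zero_S[OF E(1)] y] by blast
        obtain m where m: "m \<in> maxs E" "tle T m s" "tlt E w m" using CS_I[OF sS E] w2 by blast
        have "tlt T (zero E) s" using maxT[OF E(1) m(1)] m(2) tree_trans[OF T] unfolding tle_def by blast
        then show False using yz sD by blast
      qed
    qed
  qed
qed

lemma maxs_no_succ: "m \<in> maxs G \<Longrightarrow> \<not> tlt G m w"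
  unfolding maxs_def by blast

lemma in_impl: assumes G: "G \<in> \<Gamma>" and w: "tlt G u w" "tlt G w v" and u: "u \<in> nodes G"
  shows "w \<in> impl G"
proof -
  have wn: "w \<in> nodes G" using tree_field[OF Gtree[OF G] w(1)] by blast
  have "w \<noteq> zero G"
  proof
    assume "w = zero G"
    then have "tle G w u" using Gzero(2)[OF G u] by simp
    then show False using w(1) tree_asym[OF Gtree[OF G]] tree_irrefl[OF Gtree[OF G]] unfolding tle_def by blast
  qed
  moreover have "w \<notin> maxs G" using maxs_no_succ[of w G v] w(2) by blast
  ultimately show ?thesis unfolding impl_def using wn by blast
qed

lemma SZ: assumes G: "G \<in> \<Gamma>" shows "sons H (zero G) = sons G (zero G)"
proof
  have zS: "zero G \<in> S" using zero_S[OF G] .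
  have GT: "is_tree G" using Gtree[OF G] .
  have zG: "zero G \<in> nodes G" using Gzero(1)[OF G] .
  show "sons H (zero G) \<subseteq> sons G (zero G)"
  proof
    fix s assume s: "s \<in> sons H (zero G)"
    note sD = sonsD[OF s]
    have "s \<in> nodes H" using sD by blast
    then show "s \<in> sons G (zero G)"
    proof (rule H_cases)
      assume sS: "s \<in> S"
      have zs: "tlt T (zero G) s" using CS_S[OF sS zS] sD by blast
      obtain m where m: "m \<in> maxs G" "tle T m s" using supp_above[OF sS G zs] by blast
      have ms: "m = s"
      proof (rule ccontr)
        assume "m \<noteq> s"
        then have ms: "tlt T m s" using m(2) unfolding tle_def by blast
        have mS: "m \<in> S" using max_S[OF G m(1)] .
        have "tlt H (zero G) m" using CS_S[OF mS zS] maxT[OF G m(1)] by blast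
        moreover have "tlt H m s" using CS_S[OF sS mS] ms by blast
        ultimately show False using sD by blast
      qed
      show ?thesis
      proof (rule sonsI)
        show "s \<in> nodes G" using max_nodes[of m G] m(1) ms by blast
        show "tlt G (zero G) s" using max_gt[OF G] m(1) ms by blast
        fix w assume w1: "tlt G (zero G) w" and w2: "tlt G w s"
        have wI: "w \<in> impl G" using in_impl[OF G w1 w2 zG] .
        have "tlt H (zero G) w" using CI[OF G wI, of "zero G"] unfolding tle_def by blast
        moreover have "\<exists>m\<in>maxs G. tle T m s \<and> tlt G w m" using m(1) ms w2 unfolding tle_def by blast
        then have "tlt H w s" using CS_I[OF sS G wI] by simp
        ultimately show False using sD by blast
      qed
    next
      fix E assume E: "E \<in> \<Gamma>" "s \<in> impl E"
      have "tle H (zero G) (zero E) \<or> (zero G \<in> impl E \<and> tlt E (zero G) s)"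
        using CI[OF E, of "zero G"] sD by simp
      moreover have "zero G \<notin> impl E" using impl_S[OF E(1)] zS by blast
      ultimately consider "zero G = zero E" | "tlt H (zero G) (zero E)" unfolding tle_def by blast
      then have EG: "E = G"
      proof cases
        case 1 then show ?thesis using zero_distinct[OF E(1) G] by simp
      next
        case 2
        moreover have "tlt H (zero E) s" using CI[OF E, of "zero E"] unfolding tle_def by blast
        ultimately show ?thesis using sD by blast
      qed
      have sI: "s \<in> impl G" using E(2) EG by simp
      show ?thesis
      proof (rule sonsI)
        show "s \<in> nodes G" using impl_nodes[OF sI] by blast
        show "tlt G (zero G) s" using impl_gt[OF G sI] .
        fix w assume w1: "tlt G (zero G) w" and w2: "tlt G w s"
        have wI: "w \<in> impl G" using in_impl[OF G w1 w2 zG] .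
        have "tlt H (zero G) w" using CI[OF G wI, of "zero G"] unfolding tle_def by blast
        moreover have "tlt H w s" using CI[OF G sI, of w] wI w2 by blast
        ultimately show False using sD by blast
      qed
    qed
  qed
  show "sons G (zero G) \<subseteq> sons H (zero G)"
  proof
    fix s assume s: "s \<in> sons G (zero G)"
    note sD = sonsD[OF s]
    have sn: "s \<noteq> zero G" using sD tree_irrefl[OF GT] by blast
    consider "s \<in> maxs G" | "s \<in> impl G" using nodesG[OF G] sD sn by blast
    then show "s \<in> sons H (zero G)"
    proof cases
      case 1
      note sM = 1
      have sS: "s \<in> S" using max_S[OF G sM] .
      have zs: "tlt T (zero G) s" using maxT[OF G sM] by blast
      show ?thesis
      proof (rule sonsI)
        show "s \<in> nodes H" using sS unfolding H_nodes by blast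
        show "tlt H (zero G) s" using CS_S[OF sS zS] zs by blast
        fix w assume w1: "tlt H (zero G) w" and w2: "tlt H w s"
        have "w \<in> nodes H" using H_field w1 by blast
        then show False
        proof (rule H_cases)
          assume wS: "w \<in> S"
          have zw: "tlt T (zero G) w" using CS_S[OF wS zS] w1 by blast
          have ws: "tlt T w s" using CS_S[OF sS wS] w2 by blast
          obtain m' where m': "m' \<in> maxs G" "tle T m' w" using supp_above[OF wS G zw] by blast
          have "tle T m' s" using m'(2) ws tree_trans[OF T] unfolding tle_def by blast
          then have "m' = s" using antichain[OF G m'(1) sM _, of s] unfolding tle_def by blast
          then show False using m'(2) ws tree_asym[OF T] tree_irrefl[OF T] unfolding tle_def by blast
        next
          fix E assume E: "E \<in> \<Gamma>" "w \<in> impl E"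
          obtain k where k: "k \<in> maxs E" "tle T k s" "tlt E w k" using CS_I[OF sS E] w2 by blast
          have "tle H (zero G) (zero E) \<or> (zero G \<in> impl E \<and> tlt E (zero G) w)"
            using CI[OF E, of "zero G"] w1 by simp
          moreover have "zero G \<notin> impl E" using impl_S[OF E(1)] zS by blast
          ultimately consider "zero G = zero E" | "tlt H (zero G) (zero E)" unfolding tle_def by blast
          then show False
          proof cases
            case 1
            then have EG: "E = G" using zero_distinct[OF G E(1)] by simp
            have kG: "k \<in> maxs G" using k(1) EG by simp
            have "k = s" using antichain[OF G kG sM k(2)] unfolding tle_def by blast
            then have "tlt G w s" using k(3) EG by simp
            moreover have "tlt G (zero G) w" using impl_gt[OF G] E(2) EG by simp
            ultimately show False using sD by blast
          next
            case 2
            then have zz: "tlt T (zero G) (zero E)" using CS_S[OF zero_S[OF E(1)] zS] by blast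
            have zk: "tlt T (zero E) k" using maxT[OF E(1) k(1)] by blast
            have zEs: "tlt T (zero E) s" using zk k(2) tree_trans[OF T] unfolding tle_def by blast
            have ne: "E \<noteq> G" using zz tree_irrefl[OF T] by blast
            have ni: "\<not> incomp T (zero G) (zero E)" using zz unfolding incomp_def tle_def by blast
            consider "\<exists>m\<in>maxs E. tle T m (zero G)" | "\<exists>m\<in>maxs G. tle T m (zero E)"
              using cons2(2)[OF G E(1) ne[symmetric]] ni by blast
            then show False
            proof cases
              case 1
              then obtain m where m: "m \<in> maxs E" "tle T m (zero G)" by blast
              have "tlt T (zero E) m" using maxT[OF E(1) m(1)] by blast
              then have "tlt T (zero E) (zero G)" using m(2) tree_trans[OF T] unfolding tle_def by blast
              then show False using zz tree_asym[OF T] by blast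
            next
              case 2
              then obtain m where m: "m \<in> maxs G" "tle T m (zero E)" by blast
              have "tle T m s" using m(2) zEs tree_trans[OF T] unfolding tle_def by blast
              then have "m = s" using antichain[OF G m(1) sM _, of s] unfolding tle_def by blast
              then show False using m(2) zEs tree_asym[OF T] tree_irrefl[OF T] unfolding tle_def by blast
            qed
          qed
        qed
      qed
    next
      case 2
      show ?thesis
      proof (rule sonsI)
        show "s \<in> nodes H" using 2 G unfolding H_nodes by blast
        show "tlt H (zero G) s" using CI[OF G 2, of "zero G"] unfolding tle_def by blast
        fix w assume w1: "tlt H (zero G) w" and w2: "tlt H w s"
        have "tle H w (zero G) \<or> (w \<in> impl G \<and> tlt G w s)" using CI[OF G 2, of w] w2 by simp
        then consider "w = zero G" | "tlt H w (zero G)" | "w \<in> impl G" "tlt G w s" unfolding tle_def by blast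
        then show False
        proof cases
          case 1 then show False using w1 H_irrefl by simp
        next
          case 2 then show False using w1 H_asym by blast
        next
          case 3
          have "tlt G (zero G) w" using impl_gt[OF G 3(1)] .
          then show False using 3(2) sD by blast
        qed
      qed
    qed
  qed
qed

lemma SI: assumes G: "G \<in> \<Gamma>" and y: "y \<in> impl G" shows "sons H y = sons G y"
proof
  have GT: "is_tree G" using Gtree[OF G] .
  have yG: "y \<in> nodes G" using impl_nodes[OF y] by blast
  have yS: "y \<notin> S" using impl_S[OF G y] .
  have zy: "tlt G (zero G) y" using impl_gt[OF G y] .
  show "sons H y \<subseteq> sons G y"
  proof
    fix s assume s: "s \<in> sons H y"
    note sD = sonsD[OF s]
    have "s \<in> nodes H" using sD by blast
    then show "s \<in> sons G y"
    proof (rule H_cases)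
      assume sS: "s \<in> S"
      obtain m where m: "m \<in> maxs G" "tle T m s" "tlt G y m" using CS_I[OF sS G y] sD by blast
      have ms: "m = s"
      proof (rule ccontr)
        assume "m \<noteq> s"
        then have ms: "tlt T m s" using m(2) unfolding tle_def by blast
        have mS: "m \<in> S" using max_S[OF G m(1)] .
        have "\<exists>k\<in>maxs G. tle T k m \<and> tlt G y k" using m(1,3) unfolding tle_def by blast
        then have "tlt H y m" using CS_I[OF mS G y] by simp
        moreover have "tlt H m s" using CS_S[OF sS mS] ms by blast
        ultimately show False using sD by blast
      qed
      show ?thesis
      proof (rule sonsI)
        show "s \<in> nodes G" using max_nodes[of m G] m(1) ms by blast
        show "tlt G y s" using m(3) ms by simp
        fix w assume w1: "tlt G y w" and w2: "tlt G w s"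
        have wI: "w \<in> impl G" using in_impl[OF G w1 w2 yG] .
        have "tlt H y w" using CI[OF G wI, of y] y w1 by simp
        moreover have "\<exists>k\<in>maxs G. tle T k s \<and> tlt G w k" using m(1) ms w2 unfolding tle_def by blast
        then have "tlt H w s" using CS_I[OF sS G wI] by simp
        ultimately show False using sD by blast
      qed
    next
      fix E assume E: "E \<in> \<Gamma>" "s \<in> impl E"
      have "tle H y (zero E) \<or> (y \<in> impl E \<and> tlt E y s)" using CI[OF E, of y] sD by simp
      moreover have "y \<noteq> zero E" using zero_S[OF E(1)] yS by blast
      moreover have "\<not> tlt H y (zero E)"
      proof
        assume "tlt H y (zero E)"
        moreover have "tlt H (zero E) s" using CI[OF E, of "zero E"] unfolding tle_def by blast
        ultimately show False using sD by blast
      qed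
      ultimately have yE: "y \<in> impl E" "tlt E y s" unfolding tle_def by blast+
      have EG: "E = G" using impl_unique[OF E(1) G yE(1) y] .
      have sI: "s \<in> impl G" using E(2) EG by simp
      show ?thesis
      proof (rule sonsI)
        show "s \<in> nodes G" using impl_nodes[OF sI] by blast
        show "tlt G y s" using yE(2) EG by simp
        fix w assume w1: "tlt G y w" and w2: "tlt G w s"
        have wI: "w \<in> impl G" using in_impl[OF G w1 w2 yG] .
        have "tlt H y w" using CI[OF G wI, of y] y w1 by simp
        moreover have "tlt H w s" using CI[OF G sI, of w] wI w2 by simp
        ultimately show False using sD by blast
      qed
    qed
  qed
  show "sons G y \<subseteq> sons H y"
  proof
    fix s assume s: "s \<in> sons G y"
    note sD = sonsD[OF s]
    have sn: "s \<noteq> zero G" using sD zy tree_asym[OF GT] by blast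
    consider "s \<in> maxs G" | "s \<in> impl G" using nodesG[OF G] sD sn by blast
    then show "s \<in> sons H y"
    proof cases
      case 1
      note sM = 1
      have sS: "s \<in> S" using max_S[OF G sM] .
      show ?thesis
      proof (rule sonsI)
        show "s \<in> nodes H" using sS unfolding H_nodes by blast
        have "\<exists>k\<in>maxs G. tle T k s \<and> tlt G y k" using sM sD unfolding tle_def by blast
        then show "tlt H y s" using CS_I[OF sS G y] by simp
        fix w assume w1: "tlt H y w" and w2: "tlt H w s"
        have "w \<in> nodes H" using H_field w1 by blast
        then show False
        proof (rule H_cases)
          assume wS: "w \<in> S"
          obtain m' where m': "m' \<in> maxs G" "tle T m' w" "tlt G y m'" using CS_I[OF wS G y] w1 by blast
          have ws: "tlt T w s" using CS_S[OF sS wS] w2 by blast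
          have "tle T m' s" using m'(2) ws tree_trans[OF T] unfolding tle_def by blast
          then have "m' = s" using antichain[OF G m'(1) sM _, of s] unfolding tle_def by blast
          then show False using m'(2) ws tree_asym[OF T] tree_irrefl[OF T] unfolding tle_def by blast
        next
          fix E assume E: "E \<in> \<Gamma>" "w \<in> impl E"
          obtain k where k: "k \<in> maxs E" "tle T k s" "tlt E w k" using CS_I[OF sS E] w2 by blast
          have "tle H y (zero E) \<or> (y \<in> impl E \<and> tlt E y w)" using CI[OF E, of y] w1 by simp
          moreover have "y \<noteq> zero E" using zero_S[OF E(1)] yS by blast
          ultimately consider "tlt H y (zero E)" | "y \<in> impl E" "tlt E y w" unfolding tle_def by blast
          then show False
          proof cases
            case 1
            obtain k' where k': "k' \<in> maxs G" "tle T k' (zero E)" "tlt G y k'"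
              using CS_I[OF zero_S[OF E(1)] G y] 1 by blast
            have EG: "E \<noteq> G"
            proof
              assume "E = G"
              then have "tlt T (zero E) k'" using maxT[OF G k'(1)] by simp
              then show False using k'(2) tree_asym[OF T] tree_irrefl[OF T] unfolding tle_def by blast
            qed
            have zk: "tlt T (zero E) k" using maxT[OF E(1) k(1)] by blast
            have "tle T k' s" using k'(2) zk k(2) tree_trans[OF T] unfolding tle_def by blast
            then have "k' = s" using antichain[OF G k'(1) sM _, of s] unfolding tle_def by blast
            then have "tlt T s k" using k'(2) zk tree_trans[OF T] unfolding tle_def by blast
            then show False using k(2) tree_asym[OF T] tree_irrefl[OF T] unfolding tle_def by blast
          next
            case 2
            have EG: "E = G" using impl_unique[OF E(1) G 2(1) y] .
            have kG: "k \<in> maxs G" using k(1) EG by simp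
            have "k = s" using antichain[OF G kG sM k(2)] unfolding tle_def by blast
            then have "tlt G w s" using k(3) EG by simp
            moreover have "tlt G y w" using 2(2) EG by simp
            ultimately show False using sD by blast
          qed
        qed
      qed
    next
      case 2
      note sI = 2
      show ?thesis
      proof (rule sonsI)
        show "s \<in> nodes H" using sI G unfolding H_nodes by blast
        show "tlt H y s" using CI[OF G sI, of y] y sD by simp
        fix w assume w1: "tlt H y w" and w2: "tlt H w s"
        have "tle H w (zero G) \<or> (w \<in> impl G \<and> tlt G w s)" using CI[OF G sI, of w] w2 by simp
        then consider "tle H w (zero G)" | "w \<in> impl G" "tlt G w s" by blast
        then show False
        proof cases
          case 1
          then have "tlt H y (zero G)" using w1 H_trans unfolding tle_def by blast
          then show False using NZ[OF G y] by blast
        next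
          case 2
          have "tle H y (zero G) \<or> (y \<in> impl G \<and> tlt G y w)" using CI[OF G 2(1), of y] w1 by simp
          moreover have "y \<noteq> zero G" using zero_S[OF G] yS by blast
          ultimately have "tlt G y w" using NZ[OF G y] unfolding tle_def by blast
          then show False using 2(2) sD by blast
        qed
      qed
    qed
  qed
qed

lemma H_sons_eqpoll: assumes y: "y \<in> nodes H" shows "sons H y \<approx> (UNIV :: nat set)"
  using y
proof (rule H_cases)
  assume yS: "y \<in> S"
  show ?thesis
  proof (cases "\<exists>G\<in>\<Gamma>. y = zero G")
    case True
    then obtain G where G: "G \<in> \<Gamma>" "y = zero G" by blast
    have "zero G \<in> nodes G - maxs G" using Gzero(1)[OF G(1)] zero_not_max[OF G(1)] by blast
    then have "sons G (zero G) \<approx> (UNIV :: nat set)" using Gbr[OF G(1)] unfolding aleph0_branching_def by blast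
    then show ?thesis using SZ[OF G(1)] G(2) by simp
  next
    case False
    then have "sons H y = sons T y" using SS[OF yS] by blast
    then show ?thesis using sons_eqpoll supp_T[OF yS] by simp
  qed
next
  fix E assume E: "E \<in> \<Gamma>" "y \<in> impl E"
  have "y \<in> nodes E - maxs E" using impl_nodes[OF E(2)] by blast
  then have "sons E y \<approx> (UNIV :: nat set)" using Gbr[OF E(1)] unfolding aleph0_branching_def by blast
  then show ?thesis using SI[OF E] by simp
qed

lemma H_nonempty_sons: "y \<in> nodes H \<Longrightarrow> \<exists>s. s \<in> sons H y"
proof -
  assume "y \<in> nodes H"
  then obtain f where "bij_betw f (sons H y) (UNIV :: nat set)" using H_sons_eqpoll unfolding eqpoll_def by blast
  then have "sons H y \<noteq> {}" unfolding bij_betw_def by auto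
  then show ?thesis by blast
qed

lemma H_root_nodes: "g [] \<in> nodes H"
  using root_S unfolding H_nodes by blast

lemma H_baire: "baire_skeleton H"
proof (rule baire_skeleton_intro[OF H_tree H_root_nodes])
  show "\<forall>y\<in>nodes H. tle H (g []) y" using root_H by blast
  show "\<forall>x\<in>nodes H. finite (preds H x)" using fin_H by blast
  show "\<forall>x\<in>nodes H. sons H x \<approx> (UNIV :: nat set)" using H_sons_eqpoll by blast
qed

end

locale fhyb = hyb T g "skel ` \<phi>" for T :: "'a tree" and g and \<phi> :: "('a, 'b) ftree set" +
  fixes F :: "('a, 'b) ftree" and X :: "'b topology"
  assumes TF: "skel F = T"
    and Fb: "baire_ftree X F"
    and fg: "\<And>G. G \<in> \<phi> \<Longrightarrow> is_fgraft F G"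
    and injs: "inj_on skel \<phi>"
    and Gls: "\<And>G. G \<in> \<phi> \<Longrightarrow> locally_strict G"
    and Gop: "\<And>G. G \<in> \<phi> \<Longrightarrow> open_in X G"
    and Gbc: "\<And>G. G \<in> \<phi> \<Longrightarrow> bounded_chains (skel G)"
begin

abbreviation "L \<equiv> loss F \<phi>"
abbreviation "Hf \<equiv> fhybr F \<phi>"

lemma skel_Hf: "skel Hf = H"
  using TF unfolding fhybr_def skel_def by simp

lemma Fls: "locally_strict F" using Fb unfolding baire_ftree_def by blast
lemma Fni: "nonincreasing F" using nonincr[OF Fls TF] .
lemma Fopen: "open_in X F" using Fb unfolding baire_ftree_def by blast
lemma Fsb: "strict_branches F" using Fb unfolding baire_ftree_def by blast
lemma Ftop: "leaf F (g []) = topspace X" using Fb zero_eq TF unfolding baire_ftree_def by simp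

lemma Gni: "G \<in> \<phi> \<Longrightarrow> nonincreasing G" using fg unfolding is_fgraft_def by blast
lemma Gzero_leaf: "G \<in> \<phi> \<Longrightarrow> leaf G (zero (skel G)) \<subseteq> leaf F (zero (skel G))"
  using fg unfolding is_fgraft_def by blast
lemma Gmax_leaf: "G \<in> \<phi> \<Longrightarrow> m \<in> maxs (skel G) \<Longrightarrow> leaf G m = leaf F m"
  using fg unfolding is_fgraft_def by blast

lemma cut_L: "G \<in> \<phi> \<Longrightarrow> cut F G \<subseteq> L"
  unfolding loss_def by blast

lemma leaf_S: "x \<in> S \<Longrightarrow> leaf Hf x = leaf F x - L"
  unfolding fhybr_def leaf_def fsupp_def TF by simp

lemma leaf_I: assumes G: "G \<in> \<phi>" and x: "x \<in> impl (skel G)" shows "leaf Hf x = leaf G x - L"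
proof -
  have Gs: "skel G \<in> skel ` \<phi>" using G by blast
  have xS: "x \<notin> fsupp F \<phi>" using impl_S[OF Gs x] unfolding fsupp_def TF by simp
  have "(THE G'. G' \<in> \<phi> \<and> x \<in> impl (skel G')) = G"
  proof (rule the_equality)
    show "G \<in> \<phi> \<and> x \<in> impl (skel G)" using G x by blast
    fix G' assume G': "G' \<in> \<phi> \<and> x \<in> impl (skel G')"
    then have "skel G' = skel G" using impl_unique[OF _ Gs _ x, of "skel G'"] by blast
    then show "G' = G" using injs G G' unfolding inj_on_def by blast
  qed
  then show ?thesis using xS unfolding fhybr_def leaf_def by simp
qed

lemma leaf_G: assumes G: "G \<in> \<phi>" and x: "x \<in> nodes (skel G)" shows "leaf Hf x = leaf G x - L"
proof -
  have Gs: "skel G \<in> skel ` \<phi>" using G by blast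
  consider "x = zero (skel G)" | "x \<in> maxs (skel G)" | "x \<in> impl (skel G)" using nodesG[OF Gs x] by blast
  then show ?thesis
  proof cases
    case 1
    have "leaf Hf x = leaf F x - L" using leaf_S zero_S[OF Gs] 1 by simp
    moreover have "leaf F x - L = leaf G x - L"
      using Gzero_leaf[OF G] cut_L[OF G] 1 unfolding cut_def by blast
    ultimately show ?thesis by simp
  next
    case 2 then show ?thesis using leaf_S max_S[OF Gs 2] Gmax_leaf[OF G 2] by simp
  next
    case 3 then show ?thesis using leaf_I[OF G] by simp
  qed
qed

lemma ls_transfer:
  assumes sn: "sons H x = sons (skel A) x" and x: "x \<in> nodes (skel A) - maxs (skel A)"
    and ls: "locally_strict A"
    and lf: "\<And>y. y \<in> insert x (sons (skel A) x) \<Longrightarrow> leaf Hf y = leaf A y - L"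
  shows "disjoint_family_on (leaf Hf) (sons H x) \<and> leaf Hf x = (\<Union>s\<in>sons H x. leaf Hf s)"
proof -
  have d: "disjoint_family_on (leaf A) (sons (skel A) x)" and u: "leaf A x = (\<Union>s\<in>sons (skel A) x. leaf A s)"
    using ls x unfolding locally_strict_def by blast+
  have "disjoint_family_on (leaf Hf) (sons H x)"
    unfolding disjoint_family_on_def
  proof (intro ballI impI)
    fix a b assume a: "a \<in> sons H x" and b: "b \<in> sons H x" and ab: "a \<noteq> b"
    have "leaf A a \<inter> leaf A b = {}" using d a b ab sn unfolding disjoint_family_on_def by blast
    then show "leaf Hf a \<inter> leaf Hf b = {}" using lf a b sn by auto
  qed
  moreover have "leaf Hf x = (\<Union>s\<in>sons H x. leaf Hf s)"
  proof -
    have "leaf Hf x = leaf A x - L" using lf by simp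
    also have "\<dots> = (\<Union>s\<in>sons (skel A) x. leaf A s - L)" using u by blast
    also have "\<dots> = (\<Union>s\<in>sons H x. leaf Hf s)" using lf sn by simp
    finally show ?thesis .
  qed
  ultimately show ?thesis by blast
qed

lemma Hf_ls: "locally_strict Hf"
  unfolding locally_strict_def skel_Hf
proof (intro ballI)
  fix x assume "x \<in> nodes H - maxs H"
  then have x: "x \<in> nodes H" by blast
  show "disjoint_family_on (leaf Hf) (sons H x) \<and> leaf Hf x = (\<Union>s\<in>sons H x. leaf Hf s)"
    using x
  proof (rule H_cases)
    assume xS: "x \<in> S"
    show ?thesis
    proof (cases "\<exists>G\<in>\<phi>. x = zero (skel G)")
      case True
      then obtain G where G: "G \<in> \<phi>" "x = zero (skel G)" by blast
      have Gs: "skel G \<in> skel ` \<phi>" using G by blast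
      show ?thesis
      proof (rule ls_transfer)
        show "sons H x = sons (skel G) x" using SZ[OF Gs] G(2) by simp
        show "x \<in> nodes (skel G) - maxs (skel G)" using Gzero(1)[OF Gs] zero_not_max[OF Gs] G(2) by simp
        show "locally_strict G" using Gls[OF G(1)] .
        fix y assume "y \<in> insert x (sons (skel G) x)"
        then have "y \<in> nodes (skel G)" using Gzero(1)[OF Gs] G(2) unfolding sons_def by auto
        then show "leaf Hf y = leaf G y - L" using leaf_G[OF G(1)] by simp
      qed
    next
      case False
      then have nz: "\<forall>G\<in>skel ` \<phi>. x \<noteq> zero G" by blast
      show ?thesis
      proof (rule ls_transfer)
        show "sons H x = sons (skel F) x" using SS[OF xS nz] TF by simp
        show "x \<in> nodes (skel F) - maxs (skel F)" using supp_T[OF xS] no_maxs TF by simp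
        show "locally_strict F" using Fls .
        fix y assume y: "y \<in> insert x (sons (skel F) x)"
        have "y \<in> S"
        proof (cases "y = x")
          case True then show ?thesis using xS by simp
        next
          case False
          then have "y \<in> sons H x" using y SS[OF xS nz] TF by simp
          then have "y \<in> nodes H" unfolding sons_def by blast
          moreover have "y \<in> nodes T" using y False TF unfolding sons_def by auto
          ultimately show ?thesis using impl_T unfolding H_nodes by blast
        qed
        then show "leaf Hf y = leaf F y - L" using leaf_S by simp
      qed
    qed
  next
    fix E assume E: "E \<in> skel ` \<phi>" "x \<in> impl E"
    then obtain G where G: "G \<in> \<phi>" "E = skel G" by blast
    show ?thesis
    proof (rule ls_transfer)
      show "sons H x = sons (skel G) x" using SI[OF E] G(2) by simp
      show "x \<in> nodes (skel G) - maxs (skel G)" using impl_nodes[OF E(2)] G(2) by simp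
      show "locally_strict G" using Gls[OF G(1)] .
      fix y assume "y \<in> insert x (sons (skel G) x)"
      then have "y \<in> nodes (skel G)" using impl_nodes[OF E(2)] G(2) unfolding sons_def by auto
      then show "leaf Hf y = leaf G y - L" using leaf_G[OF G(1)] by simp
    qed
  qed
qed

lemma Hf_open: "open_in (subtopology X (topspace X - L)) Hf"
  unfolding open_in_def skel_Hf
proof
  fix x assume x: "x \<in> nodes H"
  have "\<exists>A. openin X A \<and> leaf Hf x = A - L"
    using x
  proof (rule H_cases)
    assume xS: "x \<in> S"
    have "openin X (leaf F x)" using Fopen supp_T[OF xS] TF unfolding open_in_def by blast
    then show ?thesis using leaf_S[OF xS] by blast
  next
    fix E assume E: "E \<in> skel ` \<phi>" "x \<in> impl E"
    then obtain G where G: "G \<in> \<phi>" "E = skel G" by blast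
    have "openin X (leaf G x)" using Gop[OF G(1)] impl_nodes[OF E(2)] G(2) unfolding open_in_def by blast
    then show ?thesis using leaf_I[OF G(1)] E(2) G(2) by blast
  qed
  then obtain A where A: "openin X A" "leaf Hf x = A - L" by blast
  have "A - L = (topspace X - L) \<inter> A" using openin_subset[OF A(1)] by blast
  then show "openin (subtopology X (topspace X - L)) (leaf Hf x)"
    using openin_subtopology_Int2[OF A(1), of "topspace X - L"] A(2) by simp
qed

lemma Hf_top: "leaf Hf (zero (skel Hf)) = topspace (subtopology X (topspace X - L))"
  using skel_Hf zero_H leaf_S[OF root_S] Ftop by auto

end

context fhyb
begin

lemma tle_trans_H: "tle H a b \<Longrightarrow> tle H b c \<Longrightarrow> tle H a c"
  unfolding tle_def using H_trans by blast

lemma branch_chain: "is_branch H B \<Longrightarrow> u \<in> B \<Longrightarrow> v \<in> B \<Longrightarrow> tle H u v \<or> tle H v u"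
  unfolding is_branch_def is_chain_def by blast

lemma branch_sub: "is_branch H B \<Longrightarrow> B \<subseteq> nodes H"
  unfolding is_branch_def is_chain_def by blast

lemma branch_max: assumes B: "is_branch H B" and w: "w \<in> nodes H"
  and c: "\<forall>u\<in>B. tle H u w \<or> tle H w u" shows "w \<in> B"
proof -
  have "is_chain H (insert w B)"
    unfolding is_chain_def
  proof (intro conjI ballI)
    show "insert w B \<subseteq> nodes H" using w branch_sub[OF B] by blast
    fix x y assume x: "x \<in> insert w B" and y: "y \<in> insert w B"
    show "tle H x y \<or> tle H y x"
    proof (cases "x = w")
      case True
      show ?thesis
      proof (cases "y = w")
        case True then show ?thesis using \<open>x = w\<close> unfolding tle_def by simp
      next
        case False then show ?thesis using y c True by blast
      qed
    next
      case False
      then have xB: "x \<in> B" using x by blast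
      show ?thesis
      proof (cases "y = w")
        case True then show ?thesis using xB c by blast
      next
        case False then show ?thesis using xB y branch_chain[OF B xB] by blast
      qed
    qed
  qed
  then have "insert w B = B" using B unfolding is_branch_def by blast
  then show ?thesis by blast
qed

lemma branch_down: assumes B: "is_branch H B" and b: "b \<in> B" and vb: "tlt H v b" shows "v \<in> B"
proof (rule branch_max[OF B])
  show "v \<in> nodes H" using H_field vb by blast
  show "\<forall>u\<in>B. tle H u v \<or> tle H v u"
  proof
    fix u assume u: "u \<in> B"
    consider "tle H b u" | "u = b" | "tlt H u b" using branch_chain[OF B b u] unfolding tle_def by blast
    then show "tle H u v \<or> tle H v u"
    proof cases
      case 1 then show ?thesis using vb tle_trans_H unfolding tle_def by blast
    next
      case 2 then show ?thesis using vb unfolding tle_def by blast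
    next
      case 3 then show ?thesis using lin_H[OF 3 vb] unfolding tle_def by blast
    qed
  qed
qed

lemma branch_ext: assumes B: "is_branch H B" and b: "b \<in> B" and top: "\<forall>u\<in>B. tle H u b"
  and s: "s \<in> sons H b" shows "s \<in> B"
proof (rule branch_max[OF B])
  show "s \<in> nodes H" using s unfolding sons_def by blast
  have "tlt H b s" using s unfolding sons_def by blast
  then show "\<forall>u\<in>B. tle H u s \<or> tle H s u" using top tle_trans_H unfolding tle_def by blast
qed

lemma Gs_tree: "G \<in> \<phi> \<Longrightarrow> is_tree (skel G)" using Gtree by blast

lemma above_S: assumes B: "is_branch H B" and b: "b \<in> B" shows "\<exists>c\<in>B \<inter> S. tle H b c"
proof (rule ccontr)
  assume nc: "\<not> (\<exists>c\<in>B \<inter> S. tle H b c)"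
  have bS: "b \<notin> S" using nc b unfolding tle_def by blast
  have "b \<in> nodes H" using branch_sub[OF B] b by blast
  then obtain G0 where G0: "G0 \<in> skel ` \<phi>" "b \<in> impl G0" using bS unfolding H_nodes by blast
  define K where "K = {w \<in> B. tle H b w}"
  have KI: "K \<subseteq> impl G0"
  proof
    fix w assume w: "w \<in> K"
    then have wB: "w \<in> B" and bw: "tle H b w" unfolding K_def by auto
    have wS: "w \<notin> S" using nc wB bw by blast
    have "w \<in> nodes H" using branch_sub[OF B] wB by blast
    then obtain E where E: "E \<in> skel ` \<phi>" "w \<in> impl E" using wS unfolding H_nodes by blast
    show "w \<in> impl G0"
    proof (cases "w = b")
      case True then show ?thesis using G0 by simp
    next
      case False
      then have bw': "tlt H b w" using bw unfolding tle_def by blast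
      then have "tle H b (zero E) \<or> (b \<in> impl E \<and> tlt E b w)" using CI[OF E, of b] by simp
      then consider "tle H b (zero E)" | "b \<in> impl E" by blast
      then show ?thesis
      proof cases
        case 1
        have zB: "zero E \<in> B"
        proof (cases "zero E = w")
          case True then show ?thesis using wB by simp
        next
          case False
          have "tlt H (zero E) w" using CI[OF E, of "zero E"] unfolding tle_def by blast
          then show ?thesis using branch_down[OF B wB] by blast
        qed
        then show ?thesis using nc zero_S[OF E(1)] 1 by blast
      next
        case 2 then have "E = G0" using impl_unique[OF E(1) G0(1) _ G0(2)] by blast
        then show ?thesis using E by simp
      qed
    qed
  qed
  have G0t: "is_tree G0" using Gtree[OF G0(1)] .
  have Gcomp: "tlt H u v \<Longrightarrow> u \<in> impl G0 \<Longrightarrow> v \<in> impl G0 \<Longrightarrow> tlt G0 u v" for u v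
  proof -
    assume uv: "tlt H u v" and u: "u \<in> impl G0" and v: "v \<in> impl G0"
    have "tle H u (zero G0) \<or> (u \<in> impl G0 \<and> tlt G0 u v)" using CI[OF G0(1) v, of u] uv by simp
    moreover have "u \<noteq> zero G0" using impl_S[OF G0(1) u] zero_S[OF G0(1)] by blast
    ultimately show "tlt G0 u v" using NZ[OF G0(1) u] unfolding tle_def by blast
  qed
  have "is_chain G0 K"
    unfolding is_chain_def
  proof (intro conjI ballI)
    show "K \<subseteq> nodes G0" using KI impl_nodes[of _ G0] by blast
    fix u v assume u: "u \<in> K" and v: "v \<in> K"
    have uI: "u \<in> impl G0" and vI: "v \<in> impl G0" using KI u v by blast+
    have "tle H u v \<or> tle H v u" using branch_chain[OF B] u v unfolding K_def by blast
    then consider "u = v" | "tlt H u v" | "tlt H v u" unfolding tle_def by blast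
    then show "tle G0 u v \<or> tle G0 v u"
    proof cases
      case 1 then show ?thesis unfolding tle_def by simp
    next
      case 2 then show ?thesis using Gcomp[OF 2 uI vI] unfolding tle_def by blast
    next
      case 3 then show ?thesis using Gcomp[OF 3 vI uI] unfolding tle_def by blast
    qed
  qed
  moreover have "K \<noteq> {}" using b unfolding K_def tle_def by blast
  moreover obtain G where G: "G \<in> \<phi>" "G0 = skel G" using G0(1) by blast
  moreover have "bounded_chains G0" using Gbc[OF G(1)] G(2) by simp
  ultimately have "\<exists>u\<in>nodes G0. \<forall>c\<in>K. tle G0 c u" unfolding bounded_chains_def by blast
  then obtain u where u: "u \<in> nodes G0" "\<forall>c\<in>K. tle G0 c u" by blast
  have finK: "finite K"
  proof (rule finite_subset)
    show "K \<subseteq> insert u (preds G0 u)" using u(2) unfolding preds_def tle_def by blast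
    show "finite (insert u (preds G0 u))" using Gfin[OF G0(1) u(1)] by blast
  qed
  have "\<exists>m\<in>K. \<forall>s\<in>K. s = m \<or> tlt H s m"
  proof (rule finite_rel_max[OF finK \<open>K \<noteq> {}\<close>])
    show "\<not> tlt H y y" for y by (rule H_irrefl)
    show "tlt H y z \<Longrightarrow> tlt H z w \<Longrightarrow> tlt H y w" for y z w by (rule H_trans)
    show "y \<in> K \<Longrightarrow> z \<in> K \<Longrightarrow> y = z \<or> tlt H y z \<or> tlt H z y" for y z
      using branch_chain[OF B] unfolding K_def tle_def by blast
  qed
  then obtain t where t: "t \<in> K" "\<forall>s\<in>K. s = t \<or> tlt H s t" by blast
  have tB: "t \<in> B" and bt: "tle H b t" using t(1) unfolding K_def by auto
  have top: "\<forall>w\<in>B. tle H w t"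
  proof
    fix w assume wB: "w \<in> B"
    show "tle H w t"
    proof (rule ccontr)
      assume "\<not> tle H w t"
      then have "tlt H t w" using branch_chain[OF B wB tB] unfolding tle_def by blast
      then have "tle H t w" unfolding tle_def by blast
      then have "tle H b w" using tle_trans_H[OF bt] by blast
      then have "w \<in> K" using wB unfolding K_def by blast
      then show False using t(2) \<open>\<not> tle H w t\<close> unfolding tle_def by blast
    qed
  qed
  have "t \<in> nodes H" using branch_sub[OF B] tB by blast
  then obtain s where s: "s \<in> sons H t" using H_nonempty_sons by blast
  have sB: "s \<in> B" using branch_ext[OF B tB top s] .
  have ts: "tlt H t s" using s unfolding sons_def by blast
  then have "tle H t s" unfolding tle_def by blast
  then have "tle H b s" using tle_trans_H[OF bt] by blast
  then have "s \<in> K" using sB unfolding K_def by blast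
  then have "s = t \<or> tlt H s t" using t(2) by blast
  then show False using ts H_irrefl[of t] H_asym[of t s] by blast
qed

lemma branch_max_gen: assumes B: "is_branch K B" and w: "w \<in> nodes K"
  and c: "\<forall>u\<in>B. tle K u w \<or> tle K w u" shows "w \<in> B"
proof -
  have ch: "B \<subseteq> nodes K" "\<forall>x\<in>B. \<forall>y\<in>B. tle K x y \<or> tle K y x"
    using B unfolding is_branch_def is_chain_def by blast+
  have "is_chain K (insert w B)"
    unfolding is_chain_def
  proof (intro conjI ballI)
    show "insert w B \<subseteq> nodes K" using w ch(1) by blast
    fix x y assume x: "x \<in> insert w B" and y: "y \<in> insert w B"
    show "tle K x y \<or> tle K y x"
    proof (cases "x = w")
      case True
      show ?thesis
      proof (cases "y = w")
        case True then show ?thesis using \<open>x = w\<close> unfolding tle_def by simp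
      next
        case False then show ?thesis using y c True by blast
      qed
    next
      case False
      then have xB: "x \<in> B" using x by blast
      show ?thesis
      proof (cases "y = w")
        case True then show ?thesis using xB c by blast
      next
        case False then show ?thesis using xB y ch(2) by blast
      qed
    qed
  qed
  then have "insert w B = B" using B unfolding is_branch_def by blast
  then show ?thesis by blast
qed

lemma root_in_branch: assumes B: "is_branch H B" shows "g [] \<in> B"
  using branch_max[OF B H_root_nodes] root_H branch_sub[OF B] by blast

lemma C_nomax: assumes B: "is_branch H B" and c: "c \<in> B \<inter> S" shows "\<exists>c'\<in>B \<inter> S. tlt T c c'"
proof -
  have cB: "c \<in> B" and cS: "c \<in> S" using c by auto
  have "\<exists>c'\<in>B \<inter> S. tlt H c c'"
  proof (cases "\<forall>u\<in>B. tle H u c")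
    case True
    have "c \<in> nodes H" using branch_sub[OF B] cB by blast
    then obtain s where s: "s \<in> sons H c" using H_nonempty_sons by blast
    have sB: "s \<in> B" using branch_ext[OF B cB True s] .
    obtain c' where c': "c' \<in> B \<inter> S" "tle H s c'" using above_S[OF B sB] by blast
    have "tlt H c s" using s unfolding sons_def by blast
    then have "tlt H c c'" using c'(2) H_trans unfolding tle_def by blast
    then show ?thesis using c'(1) by blast
  next
    case False
    then obtain u where u: "u \<in> B" "\<not> tle H u c" by blast
    then have cu: "tlt H c u" using branch_chain[OF B u(1) cB] unfolding tle_def by blast
    obtain c' where c': "c' \<in> B \<inter> S" "tle H u c'" using above_S[OF B u(1)] by blast
    then have "tlt H c c'" using cu H_trans unfolding tle_def by blast
    then show ?thesis using c'(1) by blast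
  qed
  then obtain c' where c': "c' \<in> B \<inter> S" "tlt H c c'" by blast
  then have "tlt T c c'" using CS_S[of c' c] cS by blast
  then show ?thesis using c'(1) by blast
qed

lemma C_infinite: assumes B: "is_branch H B" shows "infinite (B \<inter> S)"
proof
  assume fin: "finite (B \<inter> S)"
  have ne: "B \<inter> S \<noteq> {}" using root_in_branch[OF B] root_S by blast
  have "\<exists>m\<in>B \<inter> S. \<forall>s\<in>B \<inter> S. s = m \<or> tlt T s m"
  proof (rule finite_rel_max[OF fin ne])
    show "\<not> tlt T y y" for y using tree_irrefl[OF T] .
    show "tlt T y z \<Longrightarrow> tlt T z w \<Longrightarrow> tlt T y w" for y z w using tree_trans[OF T] .
    fix y z assume y: "y \<in> B \<inter> S" and z: "z \<in> B \<inter> S"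
    have "tle H y z \<or> tle H z y" using branch_chain[OF B] y z by blast
    then show "y = z \<or> tlt T y z \<or> tlt T z y" using CS_S[of z y] CS_S[of y z] y z unfolding tle_def by blast
  qed
  then obtain m where m: "m \<in> B \<inter> S" "\<forall>s\<in>B \<inter> S. s = m \<or> tlt T s m" by blast
  obtain c' where c': "c' \<in> B \<inter> S" "tlt T m c'" using C_nomax[OF B m(1)] by blast
  then have "c' = m \<or> tlt T c' m" using m(2) by blast
  then show False using c'(2) tree_irrefl[OF T] tree_asym[OF T] by blast
qed

definition BT :: "'a set \<Rightarrow> 'a set" where
  "BT B = {v \<in> nodes T. \<exists>c\<in>B \<inter> S. tle T v c}"

lemma BT_branch: assumes B: "is_branch H B" shows "is_branch T (BT B)"
proof -
  have chT: "tle T c c' \<or> tle T c' c" if "c \<in> B \<inter> S" "c' \<in> B \<inter> S" for c c'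
  proof -
    have "tle H c c' \<or> tle H c' c" using branch_chain[OF B] that by blast
    then show ?thesis using CS_S[of c' c] CS_S[of c c'] that unfolding tle_def by blast
  qed
  have ch: "is_chain T (BT B)"
    unfolding is_chain_def
  proof (intro conjI ballI)
    show "BT B \<subseteq> nodes T" unfolding BT_def by blast
    fix v v' assume v: "v \<in> BT B" and v': "v' \<in> BT B"
    obtain c where c: "c \<in> B \<inter> S" "tle T v c" using v unfolding BT_def by blast
    obtain c' where c': "c' \<in> B \<inter> S" "tle T v' c'" using v' unfolding BT_def by blast
    consider "tle T c c'" | "tle T c' c" using chT[OF c(1) c'(1)] by blast
    then show "tle T v v' \<or> tle T v' v"
    proof cases
      case 1
      have "tle T v c'" using c(2) 1 tree_trans[OF T] unfolding tle_def by blast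
      then show ?thesis using tree_lin_le[OF T _ c'(2)] by blast
    next
      case 2
      have "tle T v' c" using c'(2) 2 tree_trans[OF T] unfolding tle_def by blast
      then show ?thesis using tree_lin_le[OF T c(2)] by blast
    qed
  qed
  have "D = BT B" if D: "is_chain T D" "BT B \<subseteq> D" for D
  proof
    show "BT B \<subseteq> D" by (rule D(2))
    show "D \<subseteq> BT B"
    proof
      fix w assume wD: "w \<in> D"
      have wT: "w \<in> nodes T" using D(1) wD unfolding is_chain_def by blast
      show "w \<in> BT B"
      proof (rule ccontr)
        assume nw: "w \<notin> BT B"
        have "B \<inter> S \<subseteq> insert w (preds T w)"
        proof
          fix c assume c: "c \<in> B \<inter> S"
          then have "c \<in> BT B" unfolding BT_def using supp_T unfolding tle_def by blast
          then have "c \<in> D" using D(2) by blast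
          then have "tle T w c \<or> tle T c w" using D(1) wD unfolding is_chain_def by blast
          moreover have "\<not> tle T w c" using nw wT c unfolding BT_def by blast
          ultimately show "c \<in> insert w (preds T w)" unfolding tle_def preds_def by blast
        qed
        moreover have "finite (insert w (preds T w))" using fin_preds[OF wT] by blast
        ultimately show False using C_infinite[OF B] finite_subset by blast
      qed
    qed
  qed
  then show ?thesis using ch unfolding is_branch_def by blast
qed

lemma Fni': "x \<in> nodes T \<Longrightarrow> y \<in> nodes T \<Longrightarrow> tle T x y \<Longrightarrow> leaf F y \<subseteq> leaf F x"
  using Fni TF unfolding nonincreasing_def by blast

lemma Gni': "G \<in> \<phi> \<Longrightarrow> x \<in> nodes (skel G) \<Longrightarrow> y \<in> nodes (skel G) \<Longrightarrow> tle (skel G) x y \<Longrightarrow> leaf G y \<subseteq> leaf G x"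
  using Gni unfolding nonincreasing_def by blast

lemma Hf_fruit: assumes B: "is_branch H B" shows "\<exists>p. fruit Hf B = {p}"
proof -
  have BTb: "is_branch (skel F) (BT B)" using BT_branch[OF B] TF by simp
  obtain p where p: "fruit F (BT B) = {p}" using Fsb BTb unfolding strict_branches_def by blast
  have pv: "p \<in> leaf F v" if "v \<in> BT B" for v using p that unfolding fruit_def by blast
  have pL: "p \<notin> L"
  proof
    assume "p \<in> L"
    then obtain G where G: "G \<in> \<phi>" "p \<in> cut F G" unfolding loss_def by blast
    have Gs: "skel G \<in> skel ` \<phi>" using G(1) by blast
    define z where "z = zero (skel G)"
    have zT: "z \<in> nodes T" using zeroT[OF Gs] z_def by simp
    have pz: "p \<in> leaf F z" "p \<notin> leaf G z" using G(2) unfolding cut_def z_def by auto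
    have "z \<in> BT B"
    proof (rule branch_max_gen[OF BT_branch[OF B] zT], rule ballI)
      fix u assume u: "u \<in> BT B"
      have uT: "u \<in> nodes T" using u unfolding BT_def by blast
      show "tle T u z \<or> tle T z u"
      proof (rule ccontr)
        assume "\<not> (tle T u z \<or> tle T z u)"
        then have "leaf F u \<inter> leaf F z = {}" using disj[OF Fls TF uT zT] by blast
        then show False using pv[OF u] pz(1) by blast
      qed
    qed
    then obtain c where c: "c \<in> B \<inter> S" "tle T z c" unfolding BT_def by blast
    obtain c' where c': "c' \<in> B \<inter> S" "tlt T c c'" using C_nomax[OF B c(1)] by blast
    have zc': "tlt T z c'" using c(2) c'(2) tree_trans[OF T] unfolding tle_def by blast
    have c'S: "c' \<in> S" using c'(1) by blast
    obtain m where m: "m \<in> maxs (skel G)" "tle T m c'" using supp_above[OF c'S Gs] zc' z_def by blast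
    have c'BT: "c' \<in> BT B" using c'(1) supp_T[OF c'S] unfolding BT_def tle_def by blast
    have mT: "m \<in> nodes T" using maxT[OF Gs m(1)] by blast
    have "p \<in> leaf F m" using pv[OF c'BT] Fni'[OF mT supp_T[OF c'S] m(2)] by blast
    then have "p \<in> leaf G m" using Gmax_leaf[OF G(1) m(1)] by simp
    moreover have "leaf G m \<subseteq> leaf G z"
      using Gni'[OF G(1)] Gzero(1)[OF Gs] max_nodes[of m "skel G"] m(1) max_gt[OF Gs m(1)] z_def
      unfolding tle_def by blast
    ultimately show False using pz(2) by blast
  qed
  have pb: "p \<in> leaf Hf b" if b: "b \<in> B" for b
  proof -
    have "b \<in> nodes H" using branch_sub[OF B] b by blast
    then show ?thesis
    proof (rule H_cases)
      assume bS: "b \<in> S"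
      have "b \<in> BT B" using b bS supp_T[OF bS] unfolding BT_def tle_def by blast
      then show ?thesis using pv pL leaf_S[OF bS] by blast
    next
      fix E assume E: "E \<in> skel ` \<phi>" "b \<in> impl E"
      then obtain G where G: "G \<in> \<phi>" "E = skel G" by blast
      obtain c where c: "c \<in> B \<inter> S" "tle H b c" using above_S[OF B b] by blast
      have cS: "c \<in> S" using c(1) by blast
      have "b \<noteq> c" using impl_S[OF E] cS by blast
      then have "tlt H b c" using c(2) unfolding tle_def by blast
      then obtain m where m: "m \<in> maxs E" "tle T m c" "tlt E b m" using CS_I[OF cS E] by blast
      have cBT: "c \<in> BT B" using c(1) supp_T[OF cS] unfolding BT_def tle_def by blast
      have mT: "m \<in> nodes T" using maxT[OF E(1) m(1)] by blast
      have "p \<in> leaf F m" using pv[OF cBT] Fni'[OF mT supp_T[OF cS] m(2)] by blast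
      then have "p \<in> leaf G m" using Gmax_leaf[OF G(1)] m(1) G(2) by simp
      moreover have "leaf G m \<subseteq> leaf G b"
        using Gni'[OF G(1)] impl_nodes[OF E(2)] max_nodes[of m E] m(1,3) G(2) unfolding tle_def by blast
      ultimately show ?thesis using leaf_I[OF G(1)] E(2) G(2) pL by auto
    qed
  qed
  have "fruit Hf B = {p}"
  proof
    show "{p} \<subseteq> fruit Hf B" using pb unfolding fruit_def by blast
    show "fruit Hf B \<subseteq> {p}"
    proof
      fix q assume q: "q \<in> fruit Hf B"
      have "q \<in> leaf F v" if v: "v \<in> BT B" for v
      proof -
        obtain c where c: "c \<in> B \<inter> S" "tle T v c" using v unfolding BT_def by blast
        have cS: "c \<in> S" using c(1) by blast
        have "q \<in> leaf Hf c" using q c(1) unfolding fruit_def by blast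
        then have "q \<in> leaf F c" using leaf_S[OF cS] by blast
        moreover have "v \<in> nodes T" using v unfolding BT_def by blast
        ultimately show ?thesis using Fni'[OF _ supp_T[OF cS] c(2)] by blast
      qed
      then have "q \<in> fruit F (BT B)" unfolding fruit_def by blast
      then show "q \<in> {p}" using p by simp
    qed
  qed
  then show ?thesis by blast
qed

lemma Hf_sb: "strict_branches Hf"
  unfolding strict_branches_def skel_Hf
  using H_root_nodes Hf_fruit by blast

end

theorem mainTheorem11:
  fixes X :: "'b topology"
    and F :: "('a, 'b) ftree"
    and \<phi> :: "('a, 'b) ftree set"
  assumes "baire_ftree X F"
    and "consistent_fgrafts F \<phi>"
    and "\<forall>G\<in>\<phi>. aleph0_branching (skel G) \<and> locally_strict G \<and> open_in X G \<and>
                 bounded_chains (skel G) \<and> height_le_omega (skel G)"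
  shows "baire_ftree (subtopology X (topspace X - loss F \<phi>)) (fhybr F \<phi>)"
proof -
  have Tt: "is_tree (skel F)" using assms(1) unfolding baire_ftree_def is_ftree_def by blast
  have bs: "baire_skeleton (skel F)" using assms(1) unfolding baire_ftree_def by blast
  obtain g :: "nat list \<Rightarrow> 'a" where g: "\<And>a. g a \<in> nodes (skel F)"
    "\<And>x. x \<in> nodes (skel F) \<Longrightarrow> \<exists>a. x = g a" "inj g"
    "\<And>a b. tlt (skel F) (g a) (g b) \<longleftrightarrow> strict_prefix a b"
    using baire_skel_g[OF bs] by metis
  have cg: "consistent_grafts (skel F) (skel ` \<phi>)" using assms(2) unfolding consistent_fgrafts_def by blast
  have Gt: "is_tree G" if "G \<in> skel ` \<phi>" for G
    using cg that unfolding consistent_grafts_def is_graft_def by blast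
  interpret fhyb "skel F" g \<phi> F X
  proof (unfold_locales)
    show "is_tree (skel F)" by (rule Tt)
    show "g a \<in> nodes (skel F)" for a by (rule g(1))
    show "x \<in> nodes (skel F) \<Longrightarrow> \<exists>a. x = g a" for x by (rule g(2))
    show "inj g" by (rule g(3))
    show "tlt (skel F) (g a) (g b) \<longleftrightarrow> strict_prefix a b" for a b by (rule g(4))
    show "consistent_grafts (skel F) (skel ` \<phi>)" by (rule cg)
    show "finite (preds G x)" if GG: "G \<in> skel ` \<phi>" and xG: "x \<in> nodes G" for G x
    proof -
      obtain G' where G': "G' \<in> \<phi>" "G = skel G'" using GG by blast
      have "height_le_omega G" using assms(3) G' by blast
      then show ?thesis using height_fin_preds[OF Gt[OF GG] _ xG] by blast
    qed
    show "aleph0_branching G" if "G \<in> skel ` \<phi>" for G using assms(3) that by blast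
    show "skel F = skel F" ..
    show "baire_ftree X F" by (rule assms(1))
    show "is_fgraft F G" if "G \<in> \<phi>" for G using assms(2) that unfolding consistent_fgrafts_def by blast
    show "inj_on skel \<phi>" using assms(2) unfolding consistent_fgrafts_def by blast
    show "locally_strict G" if "G \<in> \<phi>" for G using assms(3) that by blast
    show "open_in X G" if "G \<in> \<phi>" for G using assms(3) that by blast
    show "bounded_chains (skel G)" if "G \<in> \<phi>" for G using assms(3) that by blast
  qed
  show ?thesis
    unfolding baire_ftree_def is_ftree_def skel_Hf
    using H_tree H_baire Hf_open Hf_ls Hf_sb Hf_top skel_Hf by simp
qed

end
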